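(* Let $(a_n)_{n\ge0}$ be nonzero complex numbers with $|a_0|\ge|a_1|\ge\cdots$ and $\sum_n|a_n|^2<\infty$, and let $T$ be the weighted shift $Te_n=a_ne_{n+1}$. Let $S\in\mathcal A_T$ and $k>1$ be such that $\hat S(j)=0$ for $j=1,\dots,k-1$ and $\hat S(k)\ne0$. Then $\langle S\rangle=\langle T^k\rangle$ if and only if the basis vector $e_k$ belongs to the closed linear span of $\{T^mSe_0: m\ge0\}$.
   Context: $H$ is a complex Hilbert space with orthonormal basis $\{e_n\}_{n\ge0}$, $Te_n=a_ne_{n+1}$, and $\mathcal A_T$ is the operator-norm closure of the polynomials $p(T)$ with $p(0)=0$. For $R\in\mathcal A_T$, $\langle R\rangle$ is the smallest closed ideal of $\mathcal A_T$ containing $R$. For $\lambda$ in the unit circle $\mathbb T$ let $W_\lambda e_n=\lambda^ne_n$ and $\gamma_\lambda(S)=W_\lambda SW_\lambda^*$ (a norm-continuous action of $\mathbb T$ on $\mathcal A_T$ by isometric automorphisms with $\gamma_\lambda(T)=\lambda T$). For $S\in\mathcal A_T$, $j\ge1$, $\hat S(j)\in\mathbb C$ is defined by $\int_{\mathbb T}\gamma_\lambda(S)\lambda^{-j}\,dm(\lambda)=\hat S(j)T^j$ ($dm$ normalized Haar measure). *)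

theory Defs
  imports "HOL-Analysis.Analysis" "HOL-Computational_Algebra.Polynomial"
begin

text \<open>The Hilbert space H is realised concretely as l2(N): square-summable complex
sequences, with orthonormal basis e_n = basis_vec n.  Operators are functions on
sequences; only their behaviour on l2 matters.\<close>

definition l2 :: "(nat \<Rightarrow> complex) set" where
  "l2 = {f. summable (\<lambda>n. (cmod (f n))^2)}"

definition l2norm :: "(nat \<Rightarrow> complex) \<Rightarrow> real" where
  "l2norm f = sqrt (\<Sum>n. (cmod (f n))^2)"

definition l2inner :: "(nat \<Rightarrow> complex) \<Rightarrow> (nat \<Rightarrow> complex) \<Rightarrow> complex" where
  "l2inner f g = (\<Sum>n. f n * cnj (g n))"

definition basis_vec :: "nat \<Rightarrow> nat \<Rightarrow> complex" where
  "basis_vec k = (\<lambda>n. if n = k then 1 else 0)"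

definition wshift :: "(nat \<Rightarrow> complex) \<Rightarrow> (nat \<Rightarrow> complex) \<Rightarrow> (nat \<Rightarrow> complex)" where
  "wshift a f = (\<lambda>n. if n = 0 then 0 else a (n - 1) * f (n - 1))"

definition poly_op :: "(nat \<Rightarrow> complex) \<Rightarrow> complex poly \<Rightarrow> (nat \<Rightarrow> complex) \<Rightarrow> (nat \<Rightarrow> complex)" where
  "poly_op a q f = (\<lambda>n. \<Sum>i\<le>degree q. coeff q i * ((wshift a ^^ i) f) n)"

definition op_dist_le ::
  "((nat \<Rightarrow> complex) \<Rightarrow> (nat \<Rightarrow> complex)) \<Rightarrow> ((nat \<Rightarrow> complex) \<Rightarrow> (nat \<Rightarrow> complex)) \<Rightarrow> real \<Rightarrow> bool" where
  "op_dist_le S R eps = (\<forall>f\<in>l2. l2norm (\<lambda>n. S f n - R f n) \<le> eps * l2norm f)"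

definition alg_T :: "(nat \<Rightarrow> complex) \<Rightarrow> ((nat \<Rightarrow> complex) \<Rightarrow> (nat \<Rightarrow> complex)) set" where
  "alg_T a = {S. (\<forall>f\<in>l2. S f \<in> l2) \<and>
      (\<forall>eps>0. \<exists>q. coeff q 0 = 0 \<and> op_dist_le S (poly_op a q) eps)}"

definition closed_ideal :: "(nat \<Rightarrow> complex) \<Rightarrow> ((nat \<Rightarrow> complex) \<Rightarrow> (nat \<Rightarrow> complex)) set \<Rightarrow> bool" where
  "closed_ideal a J \<longleftrightarrow> J \<subseteq> alg_T a \<and> (\<lambda>f n. 0) \<in> J
     \<and> (\<forall>S\<in>J. \<forall>R\<in>J. (\<lambda>f n. S f n + R f n) \<in> J)
     \<and> (\<forall>c. \<forall>S\<in>J. (\<lambda>f n. c * S f n) \<in> J)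
     \<and> (\<forall>S\<in>J. \<forall>A\<in>alg_T a. A \<circ> S \<in> J \<and> S \<circ> A \<in> J)
     \<and> (\<forall>S\<in>alg_T a. (\<forall>eps>0. \<exists>R\<in>J. op_dist_le S R eps) \<longrightarrow> S \<in> J)"

definition gen_ideal :: "(nat \<Rightarrow> complex) \<Rightarrow> ((nat \<Rightarrow> complex) \<Rightarrow> (nat \<Rightarrow> complex)) \<Rightarrow> ((nat \<Rightarrow> complex) \<Rightarrow> (nat \<Rightarrow> complex)) set" where
  "gen_ideal a R = \<Inter>{J. closed_ideal a J \<and> R \<in> J}"

definition gauge_act :: "complex \<Rightarrow> ((nat \<Rightarrow> complex) \<Rightarrow> (nat \<Rightarrow> complex)) \<Rightarrow> (nat \<Rightarrow> complex) \<Rightarrow> (nat \<Rightarrow> complex)" where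
  "gauge_act l S = (\<lambda>f n. l ^ n * f n) \<circ> S \<circ> (\<lambda>f n. (cnj l) ^ n * f n)"

text \<open>Fourier coefficient: the operator integral over the circle (normalised Haar measure,
lambda = cis t, t in [0, 2 pi]) of gamma_lambda(S) lambda^(-j) equals hat S(j) T^j; the
integral is taken in the weak sense (matrix coefficients), which agrees with the
norm (Bochner) integral of the norm-continuous integrand.\<close>
definition fourier_coeff :: "(nat \<Rightarrow> complex) \<Rightarrow> ((nat \<Rightarrow> complex) \<Rightarrow> (nat \<Rightarrow> complex)) \<Rightarrow> nat \<Rightarrow> complex" where
  "fourier_coeff a S j = (THE c. \<forall>f\<in>l2. \<forall>g\<in>l2.
      complex_of_real (1 / (2 * pi)) *
        integral {0..2*pi} (\<lambda>t. l2inner (gauge_act (cis t) S f) g * cnj (cis t) ^ j)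
      = c * l2inner ((wshift a ^^ j) f) g)"

end

theory Submission
  imports Defs
begin


section \<open>l2 basics\<close>

lemma l2_iff: "f \<in> l2 \<longleftrightarrow> summable (\<lambda>n. (cmod (f n))^2)"
  by (simp add: l2_def)

lemma l2norm_sq: "f \<in> l2 \<Longrightarrow> (l2norm f)^2 = (\<Sum>n. (cmod (f n))^2)"
  unfolding l2norm_def l2_def by (simp add: suminf_nonneg)

lemma l2norm_nonneg: "f \<in> l2 \<Longrightarrow> 0 \<le> l2norm f"
  unfolding l2norm_def l2_def by (simp add: suminf_nonneg)

lemma l2_partial: "f \<in> l2 \<Longrightarrow> (\<Sum>n<N. (cmod (f n))^2) \<le> (l2norm f)^2"
  by (simp add: l2norm_sq sum_le_suminf l2_iff)

lemma l2_boundI: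
  assumes "\<And>N. (\<Sum>n<N. (cmod (f n))^2) \<le> B^2" "0 \<le> B"
  shows "f \<in> l2" "l2norm f \<le> B"
proof -
  have s: "summable (\<lambda>n. (cmod (f n))^2)"
    by (rule summableI_nonneg_bounded[OF _ assms(1)]) simp
  then show "f \<in> l2" by (simp add: l2_iff)
  have "(\<Sum>n. (cmod (f n))^2) \<le> B^2" by (rule suminf_le_const[OF s assms(1)])
  then have "sqrt (\<Sum>n. (cmod (f n))^2) \<le> sqrt (B^2)" by (rule real_sqrt_le_mono)
  then show "l2norm f \<le> B" using assms(2) by (simp add: l2norm_def)
qed

lemma l2_compare:
  assumes "h \<in> l2" "\<And>n. cmod (g n) \<le> K * cmod (h n)" "0 \<le> K"
  shows "g \<in> l2" "l2norm g \<le> K * l2norm h"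
proof -
  have "(\<Sum>n<N. (cmod (g n))^2) \<le> (K * l2norm h)^2" for N
  proof -
    have "(\<Sum>n<N. (cmod (g n))^2) \<le> (\<Sum>n<N. K^2 * (cmod (h n))^2)"
      by (rule sum_mono) (metis assms(2) norm_ge_zero power_mono power_mult_distrib)
    also have "\<dots> = K^2 * (\<Sum>n<N. (cmod (h n))^2)" by (simp add: sum_distrib_left)
    also have "\<dots> \<le> K^2 * (l2norm h)^2" using l2_partial[OF assms(1)] by (simp add: mult_left_mono)
    finally show ?thesis by (simp add: power_mult_distrib)
  qed
  note P = this
  have B0: "0 \<le> K * l2norm h" using assms l2norm_nonneg by simp
  show "g \<in> l2" by (rule l2_boundI(1)[OF P B0])
  show "l2norm g \<le> K * l2norm h" by (rule l2_boundI(2)[OF P B0])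
qed

lemma l2_cong_norm:
  assumes "\<And>n. cmod (f n) = cmod (g n)"
  shows "f \<in> l2 \<longleftrightarrow> g \<in> l2" "l2norm f = l2norm g"
  using assms by (simp_all add: l2_def l2norm_def)

lemma l2_zero[simp]: "(\<lambda>n. 0) \<in> l2" "l2norm (\<lambda>n. 0) = 0"
  by (simp_all add: l2_def l2norm_def)

lemma L2_partial: "f \<in> l2 \<Longrightarrow> L2_set (\<lambda>n. cmod (f n)) {..<N} \<le> l2norm f"
proof -
  assume f: "f \<in> l2"
  have "sqrt (\<Sum>n<N. (cmod (f n))^2) \<le> sqrt ((l2norm f)^2)"
    by (rule real_sqrt_le_mono[OF l2_partial[OF f]])
  then show ?thesis using l2norm_nonneg[OF f] by (simp add: L2_set_def)
qed

lemma l2_tri_gen: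
  assumes "f \<in> l2" "g \<in> l2" "\<And>n. cmod (h n) \<le> cmod (f n) + cmod (g n)"
  shows "h \<in> l2" "l2norm h \<le> l2norm f + l2norm g"
proof -
  have "(\<Sum>n<N. (cmod (h n))^2) \<le> (l2norm f + l2norm g)^2" for N
  proof -
    have "L2_set (\<lambda>n. cmod (h n)) {..<N} \<le> L2_set (\<lambda>n. cmod (f n) + cmod (g n)) {..<N}"
      by (rule L2_set_mono) (use assms(3) in auto)
    also have "\<dots> \<le> L2_set (\<lambda>n. cmod (f n)) {..<N} + L2_set (\<lambda>n. cmod (g n)) {..<N}"
      by (rule L2_set_triangle_ineq)
    also have "\<dots> \<le> l2norm f + l2norm g" using L2_partial assms by (simp add: add_mono)
    finally have "L2_set (\<lambda>n. cmod (h n)) {..<N} \<le> l2norm f + l2norm g" .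
    then have "(L2_set (\<lambda>n. cmod (h n)) {..<N})^2 \<le> (l2norm f + l2norm g)^2"
      by (simp add: power_mono)
    then show ?thesis by (simp add: L2_set_def sum_nonneg)
  qed
  note P = this
  have B0: "0 \<le> l2norm f + l2norm g" using assms l2norm_nonneg by (simp add: add_nonneg_nonneg)
  show "h \<in> l2" by (rule l2_boundI(1)[OF P B0])
  show "l2norm h \<le> l2norm f + l2norm g" by (rule l2_boundI(2)[OF P B0])
qed

lemma l2_add:
  assumes "f \<in> l2" "g \<in> l2"
  shows "(\<lambda>n. f n + g n) \<in> l2" "l2norm (\<lambda>n. f n + g n) \<le> l2norm f + l2norm g"
  using l2_tri_gen[OF assms, of "\<lambda>n. f n + g n"] by (auto simp: norm_triangle_ineq)

lemma l2_diff:
  assumes "f \<in> l2" "g \<in> l2"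
  shows "(\<lambda>n. f n - g n) \<in> l2" "l2norm (\<lambda>n. f n - g n) \<le> l2norm f + l2norm g"
  using l2_tri_gen[OF assms, of "\<lambda>n. f n - g n"] by (auto simp: norm_triangle_ineq4)

lemma l2_scale:
  assumes "f \<in> l2"
  shows "(\<lambda>n. c * f n) \<in> l2" "l2norm (\<lambda>n. c * f n) = cmod c * l2norm f"
proof -
  have s: "summable (\<lambda>n. (cmod (f n))^2)" using assms by (simp add: l2_iff)
  have e: "(\<lambda>n. (cmod (c * f n))^2) = (\<lambda>n. (cmod c)^2 * (cmod (f n))^2)"
    by (simp add: norm_mult power_mult_distrib)
  show "(\<lambda>n. c * f n) \<in> l2" unfolding l2_iff e using s by (rule summable_mult)
  have "l2norm (\<lambda>n. c * f n) = sqrt ((cmod c)^2 * (\<Sum>n. (cmod (f n))^2))"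
    unfolding l2norm_def e using suminf_mult[OF s] by simp
  also have "\<dots> = cmod c * l2norm f" by (simp add: l2norm_def real_sqrt_mult)
  finally show "l2norm (\<lambda>n. c * f n) = cmod c * l2norm f" .
qed

lemma l2_sym: "l2norm (\<lambda>n. f n - g n) = l2norm (\<lambda>n. g n - f n)"
  by (rule l2_cong_norm(2)) (simp add: norm_minus_commute)

lemma l2_tri3:
  assumes "x \<in> l2" "y \<in> l2" "z \<in> l2"
  shows "l2norm (\<lambda>n. x n - z n) \<le> l2norm (\<lambda>n. x n - y n) + l2norm (\<lambda>n. y n - z n)"
  by (rule l2_tri_gen(2)[OF l2_diff(1)[OF assms(1,2)] l2_diff(1)[OF assms(2,3)]])
     (rule order_trans[OF _ norm_triangle_ineq], simp)

lemma l2_sum: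
  assumes "finite I" "\<And>i. i \<in> I \<Longrightarrow> F i \<in> l2"
  shows "(\<lambda>n. \<Sum>i\<in>I. c i * F i n) \<in> l2 \<and> l2norm (\<lambda>n. \<Sum>i\<in>I. c i * F i n) \<le> (\<Sum>i\<in>I. cmod (c i) * l2norm (F i))"
  using assms
proof (induction I rule: finite_induct)
  case empty
  then show ?case by simp
next
  case (insert j I)
  have Fj: "F j \<in> l2" using insert.prems by simp
  have A: "(\<lambda>n. c j * F j n) \<in> l2" "l2norm (\<lambda>n. c j * F j n) = cmod (c j) * l2norm (F j)"
    using l2_scale[OF Fj] by blast+
  have B: "(\<lambda>n. \<Sum>i\<in>I. c i * F i n) \<in> l2" "l2norm (\<lambda>n. \<Sum>i\<in>I. c i * F i n) \<le> (\<Sum>i\<in>I. cmod (c i) * l2norm (F i))"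
    using insert.IH insert.prems by blast+
  have e: "(\<lambda>n. \<Sum>i\<in>insert j I. c i * F i n) = (\<lambda>n. c j * F j n + (\<Sum>i\<in>I. c i * F i n))"
    using insert by simp
  have "l2norm (\<lambda>n. c j * F j n + (\<Sum>i\<in>I. c i * F i n)) \<le> cmod (c j) * l2norm (F j) + (\<Sum>i\<in>I. cmod (c i) * l2norm (F i))"
    using l2_add(2)[OF A(1) B(1)] A(2) B(2) by linarith
  then show ?case unfolding e using l2_add(1)[OF A(1) B(1)] insert.hyps by simp
qed

lemma l2_coord: "f \<in> l2 \<Longrightarrow> cmod (f j) \<le> l2norm f"
proof -
  assume f: "f \<in> l2"
  have "(cmod (f j))^2 \<le> (\<Sum>n<Suc j. (cmod (f n))^2)"
    by (rule member_le_sum[of j "{..<Suc j}" "\<lambda>n. (cmod (f n))^2"]) auto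
  also have "\<dots> \<le> (l2norm f)^2" by (rule l2_partial[OF f])
  finally have "(cmod (f j))^2 \<le> (l2norm f)^2" .
  then show ?thesis by (rule power2_le_imp_le) (rule l2norm_nonneg[OF f])
qed

lemma l2_shift:
  assumes "\<And>n. n < m \<Longrightarrow> g n = 0"
  shows "g \<in> l2 \<longleftrightarrow> (\<lambda>r. g (r + m)) \<in> l2"
    and "g \<in> l2 \<Longrightarrow> l2norm g = l2norm (\<lambda>r. g (r + m))"
proof -
  show "g \<in> l2 \<longleftrightarrow> (\<lambda>r. g (r + m)) \<in> l2"
    unfolding l2_iff using summable_iff_shift[of "\<lambda>n. (cmod (g n))^2" m] by simp
  assume "g \<in> l2"
  then have "(\<Sum>n. (cmod (g n))^2) = (\<Sum>n. (cmod (g (n+m)))^2) + (\<Sum>i<m. (cmod (g i))^2)"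
    by (intro suminf_split_initial_segment) (simp add: l2_iff)
  also have "(\<Sum>i<m. (cmod (g i))^2) = 0" using assms by simp
  finally show "l2norm g = l2norm (\<lambda>r. g (r + m))" by (simp add: l2norm_def)
qed

lemma l2_tail:
  assumes "f \<in> l2" "e > 0"
  shows "\<exists>N. l2norm (\<lambda>n. if n < N then 0 else f n) < e"
proof -
  have s: "summable (\<lambda>n. (cmod (f n))^2)" using assms by (simp add: l2_iff)
  have "(\<lambda>N. \<Sum>n<N. (cmod (f n))^2) \<longlonglongrightarrow> (\<Sum>n. (cmod (f n))^2)"
    using s by (rule summable_LIMSEQ)
  then obtain N where N: "norm ((\<Sum>n<N. (cmod (f n))^2) - (\<Sum>n. (cmod (f n))^2)) < e^2"
    using assms(2) LIMSEQ_D[of _ _ "e^2"] by force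
  define t where "t = (\<lambda>n. if n < N then 0 else f n)"
  have z: "\<And>n. n < N \<Longrightarrow> t n = 0" by (simp add: t_def)
  have sh: "(\<lambda>r. t (r + N)) = (\<lambda>r. f (r + N))" by (simp add: t_def)
  have "(\<lambda>r. f (r + N)) \<in> l2" using s summable_iff_shift[of "\<lambda>n. (cmod (f n))^2" N] unfolding l2_iff by simp
  then have tl: "t \<in> l2" using l2_shift(1)[OF z] sh by simp
  have "(\<Sum>n. (cmod (f n))^2) = (\<Sum>n. (cmod (f (n+N)))^2) + (\<Sum>i<N. (cmod (f i))^2)"
    by (rule suminf_split_initial_segment[OF s])
  moreover have "(\<Sum>n. (cmod (f n))^2) - (\<Sum>n<N. (cmod (f n))^2) < e^2"
    using N by (simp add: abs_less_iff)
  ultimately have "(\<Sum>n. (cmod (f (n+N)))^2) < e^2" by linarith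
  then have "l2norm (\<lambda>r. f (r + N)) < sqrt (e^2)"
    unfolding l2norm_def by (rule real_sqrt_less_mono)
  then have "l2norm t < e" using l2_shift(2)[OF z tl] sh assms(2) by simp
  then show ?thesis unfolding t_def by blast
qed

section \<open>inner product\<close>

lemma l2inner_abs_summable:
  assumes "f \<in> l2" "g \<in> l2"
  shows "summable (\<lambda>n. cmod (f n * cnj (g n)))"
proof -
  have b: "norm (cmod (f n * cnj (g n))) \<le> (cmod (f n))^2 + (cmod (g n))^2" for n
  proof -
    have "2 * cmod (f n) * cmod (g n) \<le> (cmod (f n))^2 + (cmod (g n))^2" by (rule sum_squares_bound)
    moreover have "0 \<le> cmod (f n) * cmod (g n)" by simp
    ultimately have "cmod (f n) * cmod (g n) \<le> (cmod (f n))^2 + (cmod (g n))^2" by linarith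
    then show ?thesis by (simp add: norm_mult)
  qed
  have s: "summable (\<lambda>n. (cmod (f n))^2 + (cmod (g n))^2)"
    using assms unfolding l2_iff by (rule summable_add)
  show ?thesis by (rule summable_comparison_test'[OF s b])
qed

lemma l2inner_summable: "f \<in> l2 \<Longrightarrow> g \<in> l2 \<Longrightarrow> summable (\<lambda>n. f n * cnj (g n))"
  by (rule summable_norm_cancel[OF l2inner_abs_summable])

lemma l2inner_bound:
  assumes "f \<in> l2" "g \<in> l2"
  shows "cmod (l2inner f g) \<le> l2norm f * l2norm g"
proof -
  have "cmod (l2inner f g) \<le> (\<Sum>n. cmod (f n * cnj (g n)))"
    unfolding l2inner_def by (rule summable_norm[OF l2inner_abs_summable[OF assms]])
  also have "\<dots> \<le> l2norm f * l2norm g"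
  proof (rule suminf_le_const[OF l2inner_abs_summable[OF assms]])
    fix N
    have "(\<Sum>n<N. cmod (f n * cnj (g n))) = (\<Sum>n<N. \<bar>cmod (f n)\<bar> * \<bar>cmod (g n)\<bar>)"
      by (simp add: norm_mult)
    also have "\<dots> \<le> L2_set (\<lambda>n. cmod (f n)) {..<N} * L2_set (\<lambda>n. cmod (g n)) {..<N}"
      by (rule L2_set_mult_ineq)
    also have "\<dots> \<le> l2norm f * l2norm g"
      by (rule mult_mono[OF L2_partial[OF assms(1)] L2_partial[OF assms(2)] l2norm_nonneg[OF assms(1)] L2_set_nonneg])
    finally show "(\<Sum>n<N. cmod (f n * cnj (g n))) \<le> l2norm f * l2norm g" .
  qed
  finally show ?thesis .
qed

lemma l2inner_diff:
  assumes "f \<in> l2" "h \<in> l2" "g \<in> l2"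
  shows "l2inner (\<lambda>n. f n - h n) g = l2inner f g - l2inner h g"
  unfolding l2inner_def left_diff_distrib
  by (rule suminf_diff[OF l2inner_summable[OF assms(1,3)] l2inner_summable[OF assms(2,3)], symmetric])

lemma l2inner_sum:
  assumes "finite I" "\<And>i. i \<in> I \<Longrightarrow> F i \<in> l2" "g \<in> l2"
  shows "l2inner (\<lambda>n. \<Sum>i\<in>I. c i * F i n) g = (\<Sum>i\<in>I. c i * l2inner (F i) g)"
proof -
  have e1: "(\<Sum>i\<in>I. c i * F i n) * cnj (g n) = (\<Sum>i\<in>I. c i * (F i n * cnj (g n)))" for n
    by (simp add: sum_distrib_right mult.assoc)
  have "l2inner (\<lambda>n. \<Sum>i\<in>I. c i * F i n) g = (\<Sum>n. \<Sum>i\<in>I. c i * (F i n * cnj (g n)))"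
    unfolding l2inner_def e1 ..
  also have "\<dots> = (\<Sum>i\<in>I. \<Sum>n. c i * (F i n * cnj (g n)))"
    by (rule suminf_sum[where f="\<lambda>i n. c i * (F i n * cnj (g n))"])
       (rule summable_mult[OF l2inner_summable[OF assms(2) assms(3)]])
  also have "\<dots> = (\<Sum>i\<in>I. c i * l2inner (F i) g)"
    unfolding l2inner_def
    by (rule sum.cong[OF refl], rule suminf_mult[OF l2inner_summable[OF assms(2) assms(3)]])
  finally show ?thesis .
qed

lemma l2inner_basis: "l2inner f (basis_vec j) = f j"
proof -
  have "(\<lambda>n. f n * cnj (basis_vec j n)) = (\<lambda>n. if n = j then f j else 0)"
    by (auto simp: basis_vec_def)
  moreover have "(\<Sum>n. if n = j then f j else 0) = f j"
    using sums_unique[OF sums_single[of j "\<lambda>_. f j"]] by simp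
  ultimately show ?thesis unfolding l2inner_def by simp
qed



locale ws =
  fixes a :: "nat \<Rightarrow> complex"
  assumes nz: "\<forall>n. a n \<noteq> 0"
    and dec: "\<forall>n. cmod (a (Suc n)) \<le> cmod (a n)"
    and sq: "summable (\<lambda>n. (cmod (a n))^2)"
begin

abbreviation "T \<equiv> wshift a"

definition wprod :: "nat \<Rightarrow> complex" where "wprod j = (\<Prod>l<j. a l)"

lemma wprod_nz: "wprod j \<noteq> 0"
  using nz by (simp add: wprod_def)

lemma a_mono: "m \<le> n \<Longrightarrow> cmod (a n) \<le> cmod (a m)"
  using lift_Suc_antimono_le[of "\<lambda>n. cmod (a n)"] dec by blast

lemma a_l2: "a \<in> l2" using sq by (simp add: l2_iff)

lemma T1: "(T ^^ i) f (m + i) = (\<Prod>l<i. a (m + l)) * f m"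
proof (induction i)
  case 0 then show ?case by simp
next
  case (Suc i)
  have "(T ^^ Suc i) f (m + Suc i) = a (m + i) * (T ^^ i) f (m + i)"
    by (simp add: wshift_def)
  then show ?case using Suc by (simp add: mult_ac)
qed

lemma T2: "n < i \<Longrightarrow> (T ^^ i) f n = 0"
proof (induction i arbitrary: n)
  case 0 then show ?case by simp
next
  case (Suc i)
  then show ?case by (simp add: wshift_def)
qed

lemma Tform: "(T ^^ i) f n = (if i \<le> n then (\<Prod>l<i. a (n - i + l)) * f (n - i) else 0)"
proof (cases "i \<le> n")
  case True
  then have eq: "(n - i) + i = n" by simp
  have "(T ^^ i) f n = (\<Prod>l<i. a (n - i + l)) * f (n - i)"
    using T1[of i f "n - i"] unfolding eq .
  then show ?thesis using True by simp
next
  case False then show ?thesis using T2 by simp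
qed

lemma T_diff: "(T ^^ i) (\<lambda>n. f n - g n) n = (T ^^ i) f n - (T ^^ i) g n"
  by (simp add: Tform right_diff_distrib)

lemma T_scale: "(T ^^ i) (\<lambda>n. c * f n) n = c * (T ^^ i) f n"
  by (simp add: Tform mult_ac)

lemma T_sum: "(T ^^ i) (\<lambda>n. \<Sum>k\<in>K. c k * F k n) n = (\<Sum>k\<in>K. c k * (T ^^ i) (F k) n)"
  by (simp add: Tform sum_distrib_left sum_distrib_right mult_ac)

lemma T_comm: "(T ^^ i) ((T ^^ j) f) = (T ^^ j) ((T ^^ i) f)"
  by (metis add.commute funpow_add o_apply)

lemma T_basis: "(T ^^ i) (basis_vec 0) = (\<lambda>n. if n = i then wprod i else 0)"
proof
  fix n show "(T ^^ i) (basis_vec 0) n = (if n = i then wprod i else 0)"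
    by (auto simp: Tform basis_vec_def wprod_def)
qed

lemma T_l2_1:
  assumes "f \<in> l2"
  shows "T f \<in> l2" "l2norm (T f) \<le> cmod (a 0) * l2norm f"
proof -
  have z: "\<And>n. n < 1 \<Longrightarrow> T f n = 0" by (simp add: wshift_def)
  have sh: "(\<lambda>r. T f (r + 1)) = (\<lambda>r. a r * f r)" by (simp add: wshift_def)
  have b: "cmod (a r * f r) \<le> cmod (a 0) * cmod (f r)" for r
    using a_mono[of 0 r] by (simp add: norm_mult mult_right_mono)
  have c1: "(\<lambda>r. a r * f r) \<in> l2" "l2norm (\<lambda>r. a r * f r) \<le> cmod (a 0) * l2norm f"
    using l2_compare[OF assms b] by auto
  show Tf: "T f \<in> l2" using l2_shift(1)[where m=1 and g="T f", OF z] sh c1 by simp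
  show "l2norm (T f) \<le> cmod (a 0) * l2norm f" using l2_shift(2)[where m=1 and g="T f", OF z Tf] sh c1 by simp
qed

lemma T_l2:
  assumes "f \<in> l2"
  shows "(T ^^ i) f \<in> l2 \<and> l2norm ((T ^^ i) f) \<le> cmod (a 0) ^ i * l2norm f"
proof (induction i)
  case 0 then show ?case using assms by simp
next
  case (Suc i)
  then have A: "(T ^^ i) f \<in> l2" "l2norm ((T ^^ i) f) \<le> cmod (a 0) ^ i * l2norm f" by auto
  have "l2norm (T ((T ^^ i) f)) \<le> cmod (a 0) * l2norm ((T ^^ i) f)" by (rule T_l2_1(2)[OF A(1)])
  also have "\<dots> \<le> cmod (a 0) * (cmod (a 0) ^ i * l2norm f)" by (rule mult_left_mono[OF A(2)]) simp
  finally show ?case using T_l2_1(1)[OF A(1)] by simp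
qed

section \<open>poly_op algebra\<close>

lemma P1: "degree q < D \<Longrightarrow> poly_op a q f n = (\<Sum>i<D. coeff q i * (T ^^ i) f n)"
  unfolding poly_op_def
  by (rule sum.mono_neutral_left) (auto simp: coeff_eq_0)

lemma P1': "poly_op a q f n = (\<Sum>i<Suc (degree q). coeff q i * (T ^^ i) f n)"
  by (rule P1) simp

lemma P_add: "poly_op a (p + q) f n = poly_op a p f n + poly_op a q f n"
proof -
  define D where "D = Suc (max (degree p) (degree q))"
  have d: "degree p < D" "degree q < D" "degree (p + q) < D"
    using degree_add_le[of p "max (degree p) (degree q)" q] by (auto simp: D_def)
  show ?thesis unfolding P1[OF d(1)] P1[OF d(2)] P1[OF d(3)]
    by (simp add: sum.distrib distrib_right)
qed

lemma P_diff: "poly_op a (p - q) f n = poly_op a p f n - poly_op a q f n"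
proof -
  define D where "D = Suc (max (degree p) (degree q))"
  have d: "degree p < D" "degree q < D" "degree (p - q) < D"
    using degree_diff_le[of p "max (degree p) (degree q)" q] by (auto simp: D_def)
  show ?thesis unfolding P1[OF d(1)] P1[OF d(2)] P1[OF d(3)]
    by (simp add: sum_subtractf left_diff_distrib)
qed

lemma P_smult: "poly_op a (smult c p) f n = c * poly_op a p f n"
proof -
  have d: "degree p < Suc (degree p)" "degree (smult c p) < Suc (degree p)"
    using degree_smult_le[of c p] by auto
  show ?thesis unfolding P1[OF d(1)] P1[OF d(2)] by (simp only: coeff_smult sum_distrib_left mult.assoc)
qed

lemma P_const: "poly_op a [:c:] f n = c * f n"
  by (simp add: poly_op_def)

lemma P_zero: "poly_op a 0 f n = 0"
  by (simp add: poly_op_def)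

lemma P_monom: "poly_op a (monom c m) f n = c * (T ^^ m) f n"
proof -
  have d: "degree (monom c m) < Suc m" by (simp add: degree_monom_le le_imp_less_Suc)
  show ?thesis unfolding P1[OF d] by (simp add: if_distrib sum.delta)
qed

lemma T_sumL: "T (\<lambda>n. \<Sum>k\<in>K. F k n) n = (\<Sum>k\<in>K. T (F k) n)"
  by (simp add: wshift_def sum_distrib_left)

lemma P_pCons0: "poly_op a (pCons 0 p) f n = T (poly_op a p f) n"
proof -
  define D where "D = Suc (degree p)"
  have d: "degree p < D" "degree (pCons 0 p) < Suc D"
    by (auto simp: D_def degree_pCons_le le_imp_less_Suc)
  have "poly_op a (pCons 0 p) f n = (\<Sum>i<Suc D. coeff (pCons 0 p) i * (T ^^ i) f n)"
    by (rule P1[OF d(2)])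
  also have "\<dots> = (\<Sum>i<D. coeff p i * T ((T ^^ i) f) n)"
    unfolding sum.lessThan_Suc_shift by simp
  also have "\<dots> = T (poly_op a p f) n"
    unfolding P1[OF d(1)] by (simp add: wshift_def sum_distrib_left mult_ac)
  finally show ?thesis .
qed

lemma P_pCons: "poly_op a (pCons c p) f n = c * f n + T (poly_op a p f) n"
proof -
  have "pCons c p = [:c:] + pCons 0 p" by simp
  then show ?thesis using P_add P_const P_pCons0 by metis
qed

lemma P_mult: "poly_op a (p * q) f = poly_op a p (poly_op a q f)"
proof (induction p rule: pCons_induct)
  case 0
  then show ?case by (simp add: P_zero[abs_def])
next
  case (pCons c p)
  show ?case
  proof
    fix n
    have "poly_op a (pCons c p * q) f n = c * poly_op a q f n + T (poly_op a (p * q) f) n"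
      by (simp add: P_add P_smult P_pCons0)
    also have "\<dots> = poly_op a (pCons c p) (poly_op a q f) n"
      using pCons.IH by (simp add: P_pCons)
    finally show "poly_op a (pCons c p * q) f n = poly_op a (pCons c p) (poly_op a q f) n" .
  qed
qed

lemma P_comm: "poly_op a p (poly_op a q f) = poly_op a q (poly_op a p f)"
  by (metis P_mult mult.commute)

lemma P_fdiff: "poly_op a q (\<lambda>n. f n - g n) n = poly_op a q f n - poly_op a q g n"
  by (simp add: poly_op_def T_diff right_diff_distrib sum_subtractf)

lemma P_basis: "poly_op a q (basis_vec 0) j = coeff q j * wprod j"
proof -
  have d: "degree q < Suc (max (degree q) j)" by simp
  show ?thesis unfolding P1[OF d] T_basis by (simp add: if_distrib sum.delta' cong: if_cong)
qed

definition M :: "complex poly \<Rightarrow> real" where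
  "M q = (\<Sum>i<Suc (degree q). cmod (coeff q i) * cmod (a 0) ^ i)"

lemma M_nonneg: "0 \<le> M q" by (simp add: M_def sum_nonneg)

lemma P_l2:
  assumes "f \<in> l2"
  shows "poly_op a q f \<in> l2" "l2norm (poly_op a q f) \<le> M q * l2norm f"
proof -
  have e: "poly_op a q f = (\<lambda>n. \<Sum>i<Suc (degree q). coeff q i * (T ^^ i) f n)"
    using P1' by blast
  have S: "(\<lambda>n. \<Sum>i<Suc (degree q). coeff q i * (T ^^ i) f n) \<in> l2 \<and>
     l2norm (\<lambda>n. \<Sum>i<Suc (degree q). coeff q i * (T ^^ i) f n) \<le> (\<Sum>i<Suc (degree q). cmod (coeff q i) * l2norm ((T ^^ i) f))"
    by (rule l2_sum) (use T_l2[OF assms] in auto)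
  show "poly_op a q f \<in> l2" using S e by simp
  have "(\<Sum>i<Suc (degree q). cmod (coeff q i) * l2norm ((T ^^ i) f)) \<le> (\<Sum>i<Suc (degree q). cmod (coeff q i) * (cmod (a 0) ^ i * l2norm f))"
    by (rule sum_mono, rule mult_left_mono) (use T_l2[OF assms] in auto)
  also have "\<dots> = M q * l2norm f" unfolding M_def sum_distrib_right by (simp only: mult_ac)
  finally show "l2norm (poly_op a q f) \<le> M q * l2norm f" using S e by simp
qed

end


lemma basis_l2: "basis_vec m \<in> l2" "l2norm (basis_vec m) = 1"
proof -
  have e: "(\<lambda>n. (cmod (basis_vec m n))^2) = (\<lambda>n. if n = m then 1 else 0)"
    by (auto simp: basis_vec_def)
  show "basis_vec m \<in> l2" unfolding l2_iff e by simp
  have "(\<Sum>n. if n = m then (1::real) else 0) = 1"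
    using sums_unique[OF sums_single[of m "\<lambda>_. (1::real)"]] by simp
  then show "l2norm (basis_vec m) = 1" unfolding l2norm_def e by simp
qed

context ws
begin

abbreviation "e0 \<equiv> basis_vec 0"

definition C :: real where "C = l2norm a / cmod (a 0)"

lemma C_nonneg: "0 \<le> C"
  using l2norm_nonneg[OF a_l2] by (simp add: C_def)

lemma P_fscale: "poly_op a q (\<lambda>n. c * g n) n = c * poly_op a q g n"
  by (simp add: poly_op_def T_scale sum_distrib_left mult_ac)

lemma P_fsum: "poly_op a q (\<lambda>n. \<Sum>k\<in>K. c k * F k n) n = (\<Sum>k\<in>K. c k * poly_op a q (F k) n)"
  unfolding poly_op_def T_sum by (simp add: sum_distrib_left mult_ac sum.swap[of _ K])

lemma P_monom1: "poly_op a (monom 1 m) g = (T ^^ m) g"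
  by (rule ext) (simp add: P_monom)

lemma P_T: "poly_op a q ((T ^^ m) g) = (T ^^ m) (poly_op a q g)"
  using P_comm[of q "monom 1 m" g] by (simp add: P_monom1)

lemma basis_as_T: "basis_vec m = (\<lambda>n. (1 / wprod m) * (T ^^ m) e0 n)"
  unfolding T_basis by (rule ext) (simp add: basis_vec_def wprod_nz)

lemma Tv_bound:
  assumes v: "v \<in> l2" "v 0 = 0"
  shows "(T ^^ m) v \<in> l2" "l2norm ((T ^^ m) v) \<le> (\<Prod>l<m. cmod (a (Suc l))) * l2norm v"
proof -
  have z: "\<And>n. n < m \<Longrightarrow> (T ^^ m) v n = 0" by (rule T2)
  have sh: "(\<lambda>r. (T ^^ m) v (r + m)) = (\<lambda>r. (\<Prod>l<m. a (r + l)) * v r)"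
    by (rule ext) (simp add: T1)
  have b: "cmod ((\<Prod>l<m. a (r + l)) * v r) \<le> (\<Prod>l<m. cmod (a (Suc l))) * cmod (v r)" for r
  proof (cases "r = 0")
    case True then show ?thesis using v by simp
  next
    case False
    have "(\<Prod>l<m. cmod (a (r + l))) \<le> (\<Prod>l<m. cmod (a (Suc l)))"
      by (rule prod_mono) (use False a_mono in auto)
    then show ?thesis by (simp add: norm_mult prod_norm[symmetric] mult_right_mono)
  qed
  have K: "0 \<le> (\<Prod>l<m. cmod (a (Suc l)))" by (simp add: prod_nonneg)
  have c1: "(\<lambda>r. (\<Prod>l<m. a (r + l)) * v r) \<in> l2"
    "l2norm (\<lambda>r. (\<Prod>l<m. a (r + l)) * v r) \<le> (\<Prod>l<m. cmod (a (Suc l))) * l2norm v"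
    using l2_compare[OF v(1) b K] by auto
  show Tv: "(T ^^ m) v \<in> l2" using l2_shift(1)[where m=m and g="(T ^^ m) v", OF z] sh c1 by simp
  show "l2norm ((T ^^ m) v) \<le> (\<Prod>l<m. cmod (a (Suc l))) * l2norm v"
    using l2_shift(2)[where m=m and g="(T ^^ m) v", OF z Tv] sh c1 by simp
qed

lemma ratio: "(\<Prod>l<m. cmod (a (Suc l))) / cmod (wprod m) = cmod (a m) / cmod (a 0)"
proof -
  have e1: "(\<Prod>l<Suc m. cmod (a l)) = cmod (a 0) * (\<Prod>l<m. cmod (a (Suc l)))"
    by (rule prod.lessThan_Suc_shift)
  have e2: "(\<Prod>l<Suc m. cmod (a l)) = (\<Prod>l<m. cmod (a l)) * cmod (a m)"
    by (rule prod.lessThan_Suc)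
  have e3: "cmod (wprod m) = (\<Prod>l<m. cmod (a l))" by (simp add: wprod_def prod_norm)
  have n1: "cmod (a 0) \<noteq> 0" using nz by auto
  have n2: "cmod (wprod m) \<noteq> 0" using wprod_nz by auto
  have "(\<Prod>l<m. cmod (a (Suc l))) * cmod (a 0) = cmod (a m) * cmod (wprod m)"
    using e1 e2 e3 by (simp only: mult.commute)
  then show ?thesis using frac_eq_eq[OF n2 n1] by simp
qed

lemma Pe_bound:
  assumes q0: "coeff q 0 = 0"
  shows "poly_op a q (basis_vec m) \<in> l2"
    "l2norm (poly_op a q (basis_vec m)) \<le> cmod (a m) / cmod (a 0) * l2norm (poly_op a q e0)"
proof -
  define v where "v = poly_op a q e0"
  have v1: "v \<in> l2" unfolding v_def by (rule P_l2(1)[OF basis_l2(1)])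
  have v2: "v 0 = 0" unfolding v_def P_basis q0 by simp
  note v = v1 v2
  have e: "poly_op a q (basis_vec m) = (\<lambda>n. (1 / wprod m) * (T ^^ m) v n)"
    by (subst basis_as_T[of m], rule ext, subst P_fscale, simp only: P_T v_def)
  have Tv: "(T ^^ m) v \<in> l2" "l2norm ((T ^^ m) v) \<le> (\<Prod>l<m. cmod (a (Suc l))) * l2norm v"
    using Tv_bound[OF v] by auto
  show "poly_op a q (basis_vec m) \<in> l2" unfolding e by (rule l2_scale(1)[OF Tv(1)])
  have "l2norm (poly_op a q (basis_vec m)) = (1 / cmod (wprod m)) * l2norm ((T ^^ m) v)"
    unfolding e l2_scale(2)[OF Tv(1)] by (simp add: norm_divide)
  also have "\<dots> \<le> (1 / cmod (wprod m)) * ((\<Prod>l<m. cmod (a (Suc l))) * l2norm v)"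
    by (rule mult_left_mono[OF Tv(2)]) simp
  also have "\<dots> = ((\<Prod>l<m. cmod (a (Suc l))) / cmod (wprod m)) * l2norm v" by simp
  also have "\<dots> = cmod (a m) / cmod (a 0) * l2norm v" unfolding ratio ..
  finally show "l2norm (poly_op a q (basis_vec m)) \<le> cmod (a m) / cmod (a 0) * l2norm (poly_op a q e0)"
    by (simp add: v_def)
qed

lemma HSp:
  assumes q0: "coeff q 0 = 0" and f: "f \<in> l2"
  shows "l2norm (poly_op a q f) \<le> C * l2norm (poly_op a q e0) * l2norm f"
proof (rule field_le_epsilon)
  fix e :: real assume e: "0 < e"
  define V where "V = l2norm (poly_op a q e0)"
  have V: "0 \<le> V" unfolding V_def by (rule l2norm_nonneg[OF P_l2(1)[OF basis_l2(1)]])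
  have Mp: "0 < M q + 1" using M_nonneg[of q] by linarith
  have "0 < e / (M q + 1)" using e Mp by (rule divide_pos_pos)
  then obtain N where N: "l2norm (\<lambda>n. if n < N then 0 else f n) < e / (M q + 1)"
    using l2_tail[OF f] by blast
  define fN where "fN = (\<lambda>n. \<Sum>m<N. f m * basis_vec m n)"
  define tN where "tN = (\<lambda>n. if n < N then 0 else f n)"
  have fN': "fN n = (if n < N then f n else 0)" for n
    unfolding fN_def basis_vec_def by (simp add: if_distrib sum.delta' cong: if_cong)
  have tN: "tN \<in> l2" "l2norm tN \<le> l2norm f" using l2_compare[OF f, of tN 1] by (auto simp: tN_def)
  have split: "f n = fN n + tN n" for n by (simp add: fN' tN_def)
  have tdiff: "tN = (\<lambda>n. f n - fN n)" by (rule ext) (simp add: split)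
  have S: "(\<lambda>n. \<Sum>m<N. f m * poly_op a q (basis_vec m) n) \<in> l2 \<and>
    l2norm (\<lambda>n. \<Sum>m<N. f m * poly_op a q (basis_vec m) n) \<le> (\<Sum>m<N. cmod (f m) * l2norm (poly_op a q (basis_vec m)))"
    by (rule l2_sum) (use Pe_bound[OF q0] in auto)
  have pfN: "poly_op a q fN = (\<lambda>n. \<Sum>m<N. f m * poly_op a q (basis_vec m) n)"
    unfolding fN_def by (rule ext) (rule P_fsum)
  have "(\<Sum>m<N. cmod (f m) * l2norm (poly_op a q (basis_vec m))) \<le> (\<Sum>m<N. cmod (f m) * (cmod (a m) / cmod (a 0) * V))"
    by (rule sum_mono, rule mult_left_mono) (use Pe_bound[OF q0] V_def in auto)
  also have "\<dots> = (V / cmod (a 0)) * (\<Sum>m<N. \<bar>cmod (f m)\<bar> * \<bar>cmod (a m)\<bar>)"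
    by (simp add: sum_distrib_left mult_ac)
  also have "\<dots> \<le> (V / cmod (a 0)) * (L2_set (\<lambda>n. cmod (f n)) {..<N} * L2_set (\<lambda>n. cmod (a n)) {..<N})"
    by (rule mult_left_mono[OF L2_set_mult_ineq]) (simp add: V)
  also have "\<dots> \<le> (V / cmod (a 0)) * (l2norm f * l2norm a)"
    by (rule mult_left_mono[OF mult_mono[OF L2_partial[OF f] L2_partial[OF a_l2] l2norm_nonneg[OF f] L2_set_nonneg]]) (simp add: V)
  also have "\<dots> = C * V * l2norm f" by (simp add: C_def)
  finally have hd: "l2norm (poly_op a q fN) \<le> C * V * l2norm f" using S pfN by simp
  have pfN_l2: "poly_op a q fN \<in> l2" using S pfN by simp
  have ptN: "poly_op a q tN \<in> l2" "l2norm (poly_op a q tN) \<le> M q * l2norm tN" using P_l2[OF tN(1)] by auto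
  have pt: "poly_op a q f n = poly_op a q fN n + poly_op a q tN n" for n
    unfolding tdiff P_fdiff by simp
  have "l2norm (poly_op a q f) \<le> l2norm (poly_op a q fN) + l2norm (poly_op a q tN)"
    by (rule l2_tri_gen(2)[OF pfN_l2 ptN(1)]) (simp add: pt norm_triangle_ineq)
  also have "\<dots> \<le> C * V * l2norm f + M q * l2norm tN" using hd ptN(2) by linarith
  also have "M q * l2norm tN \<le> (M q + 1) * (e / (M q + 1))"
    using N M_nonneg l2norm_nonneg[OF tN(1)] unfolding tN_def[symmetric]
    by (intro mult_mono) auto
  also have "(M q + 1) * (e / (M q + 1)) = e" using M_nonneg[of q] by simp
  finally show "l2norm (poly_op a q f) \<le> C * l2norm (poly_op a q e0) * l2norm f + e"
    by (simp add: V_def)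
qed

end


lemma l2norm_zero:
  assumes "f \<in> l2" "l2norm f = 0"
  shows "f = (\<lambda>n. 0)"
proof -
  have s: "summable (\<lambda>n. (cmod (f n))^2)" using assms(1) by (simp add: l2_iff)
  have "(\<Sum>n. (cmod (f n))^2) = 0" using l2norm_sq[OF assms(1)] assms(2) by simp
  then have "\<forall>n. (cmod (f n))^2 = 0" using suminf_eq_zero_iff[OF s] by simp
  then show ?thesis by auto
qed

lemma l2_eq_if_small:
  assumes "f \<in> l2" "g \<in> l2" "\<And>e. e > 0 \<Longrightarrow> l2norm (\<lambda>n. f n - g n) \<le> e"
  shows "f = g"
proof -
  have d: "(\<lambda>n. f n - g n) \<in> l2" by (rule l2_diff(1)[OF assms(1,2)])
  have "l2norm (\<lambda>n. f n - g n) \<le> 0"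
    by (rule field_le_epsilon) (use assms(3) in simp)
  then have "l2norm (\<lambda>n. f n - g n) = 0" using l2norm_nonneg[OF d] by linarith
  then have "(\<lambda>n. f n - g n) = (\<lambda>n. 0)" by (rule l2norm_zero[OF d])
  then show ?thesis by (metis (no_types) eq_iff_diff_eq_0 ext)
qed

lemma tri2: "cmod ((x + y) - (u + v)) \<le> cmod (x - u) + cmod (y - v)"
  by (metis add_diff_add norm_triangle_ineq)

lemma tri_sub: "cmod x \<le> cmod (x - y) + cmod y"
  by (metis diff_add_cancel norm_triangle_ineq)

context ws
begin

lemma A_l2: "X \<in> alg_T a \<Longrightarrow> f \<in> l2 \<Longrightarrow> X f \<in> l2"
  by (simp add: alg_T_def)

lemma A_approx:
  assumes "X \<in> alg_T a" "eps > 0"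
  obtains q where "coeff q 0 = 0" "\<And>f. f \<in> l2 \<Longrightarrow> l2norm (\<lambda>n. X f n - poly_op a q f n) \<le> eps * l2norm f"
  using assms unfolding alg_T_def op_dist_le_def by blast

lemma poly_in_A: "coeff q 0 = 0 \<Longrightarrow> poly_op a q \<in> alg_T a"
  unfolding alg_T_def op_dist_le_def
  using P_l2(1) l2norm_nonneg by (auto intro!: exI[of _ q])

lemma P_monom1_fun: "poly_op a (monom 1 m) = (T ^^ m)"
  by (rule ext) (rule P_monom1)

lemma T_in_A: "m \<noteq> 0 \<Longrightarrow> (T ^^ m) \<in> alg_T a"
  using poly_in_A[of "monom 1 m"] unfolding P_monom1_fun by simp

lemma zero_in_A: "(\<lambda>f n. 0) \<in> alg_T a"
proof -
  have "poly_op a 0 = (\<lambda>f n. 0)" by (simp add: P_zero[abs_def])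
  then show ?thesis using poly_in_A[of 0] by simp
qed

lemma A_add:
  assumes X: "X \<in> alg_T a" and Y: "Y \<in> alg_T a"
  shows "(\<lambda>f n. X f n + Y f n) \<in> alg_T a"
  unfolding alg_T_def mem_Collect_eq op_dist_le_def
proof (intro conjI allI impI ballI)
  fix f assume "f \<in> l2"
  then show "(\<lambda>n. X f n + Y f n) \<in> l2" using l2_add(1) A_l2 X Y by blast
next
  fix eps :: real assume eps: "eps > 0"
  obtain p where p: "coeff p 0 = 0" "\<And>f. f \<in> l2 \<Longrightarrow> l2norm (\<lambda>n. X f n - poly_op a p f n) \<le> eps/2 * l2norm f"
    using A_approx[OF X, of "eps/2"] eps by auto
  obtain q where q: "coeff q 0 = 0" "\<And>f. f \<in> l2 \<Longrightarrow> l2norm (\<lambda>n. Y f n - poly_op a q f n) \<le> eps/2 * l2norm f"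
    using A_approx[OF Y, of "eps/2"] eps by auto
  show "\<exists>r. coeff r 0 = 0 \<and> (\<forall>f\<in>l2. l2norm (\<lambda>n. X f n + Y f n - poly_op a r f n) \<le> eps * l2norm f)"
  proof (intro exI conjI ballI)
    show "coeff (p + q) 0 = 0" using p q by simp
    fix f assume f: "f \<in> l2"
    have d1: "(\<lambda>n. X f n - poly_op a p f n) \<in> l2" using l2_diff(1) A_l2[OF X f] P_l2(1)[OF f] by blast
    have d2: "(\<lambda>n. Y f n - poly_op a q f n) \<in> l2" using l2_diff(1) A_l2[OF Y f] P_l2(1)[OF f] by blast
    have "l2norm (\<lambda>n. X f n + Y f n - poly_op a (p + q) f n) \<le> l2norm (\<lambda>n. X f n - poly_op a p f n) + l2norm (\<lambda>n. Y f n - poly_op a q f n)"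
      by (rule l2_tri_gen(2)[OF d1 d2]) (simp only: P_add tri2)
    also have "\<dots> \<le> eps/2 * l2norm f + eps/2 * l2norm f" using p(2)[OF f] q(2)[OF f] by linarith
    finally show "l2norm (\<lambda>n. X f n + Y f n - poly_op a (p + q) f n) \<le> eps * l2norm f" by simp
  qed
qed

lemma A_scale:
  assumes X: "X \<in> alg_T a"
  shows "(\<lambda>f n. c * X f n) \<in> alg_T a"
  unfolding alg_T_def mem_Collect_eq op_dist_le_def
proof (intro conjI allI impI ballI)
  fix f assume "f \<in> l2"
  then show "(\<lambda>n. c * X f n) \<in> l2" using l2_scale(1) A_l2 X by blast
next
  fix eps :: real assume eps: "eps > 0"
  have cp: "0 < cmod c + 1" by (simp add: add_nonneg_pos)
  obtain p where p: "coeff p 0 = 0" "\<And>f. f \<in> l2 \<Longrightarrow> l2norm (\<lambda>n. X f n - poly_op a p f n) \<le> eps / (cmod c + 1) * l2norm f"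
    using A_approx[OF X, of "eps / (cmod c + 1)"] eps cp by auto
  show "\<exists>r. coeff r 0 = 0 \<and> (\<forall>f\<in>l2. l2norm (\<lambda>n. c * X f n - poly_op a r f n) \<le> eps * l2norm f)"
  proof (intro exI conjI ballI)
    show "coeff (smult c p) 0 = 0" using p by simp
    fix f assume f: "f \<in> l2"
    have d1: "(\<lambda>n. X f n - poly_op a p f n) \<in> l2" using l2_diff(1) A_l2[OF X f] P_l2(1)[OF f] by blast
    have e: "(\<lambda>n. c * X f n - poly_op a (smult c p) f n) = (\<lambda>n. c * (X f n - poly_op a p f n))"
      by (simp add: P_smult right_diff_distrib)
    have "l2norm (\<lambda>n. c * X f n - poly_op a (smult c p) f n) = cmod c * l2norm (\<lambda>n. X f n - poly_op a p f n)"
      unfolding e by (rule l2_scale(2)[OF d1])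
    also have "\<dots> \<le> cmod c * (eps / (cmod c + 1) * l2norm f)" by (rule mult_left_mono[OF p(2)[OF f]]) simp
    also have "\<dots> \<le> (cmod c + 1) * (eps / (cmod c + 1) * l2norm f)"
      by (rule mult_right_mono) (use eps cp l2norm_nonneg[OF f] in auto)
    also have "\<dots> = eps * l2norm f" using cp by simp
    finally show "l2norm (\<lambda>n. c * X f n - poly_op a (smult c p) f n) \<le> eps * l2norm f" .
  qed
qed

lemma A_bound:
  assumes X: "X \<in> alg_T a"
  obtains B where "B \<ge> 0" "\<And>f. f \<in> l2 \<Longrightarrow> l2norm (X f) \<le> B * l2norm f"
proof -
  obtain q where q: "coeff q 0 = 0" "\<And>f. f \<in> l2 \<Longrightarrow> l2norm (\<lambda>n. X f n - poly_op a q f n) \<le> 1 * l2norm f"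
    using A_approx[OF X, of 1] by auto
  have "l2norm (X f) \<le> (1 + M q) * l2norm f" if f: "f \<in> l2" for f
  proof -
    have d1: "(\<lambda>n. X f n - poly_op a q f n) \<in> l2" using l2_diff(1) A_l2[OF X f] P_l2(1)[OF f] by blast
    have "l2norm (X f) \<le> l2norm (\<lambda>n. X f n - poly_op a q f n) + l2norm (poly_op a q f)"
      by (rule l2_tri_gen(2)[OF d1 P_l2(1)[OF f]]) (rule tri_sub)
    also have "\<dots> \<le> 1 * l2norm f + M q * l2norm f" using q(2)[OF f] P_l2(2)[OF f, where q=q] by linarith
    finally show ?thesis by (simp add: distrib_right)
  qed
  then show ?thesis using that[of "1 + M q"] M_nonneg[of q] by simp
qed

lemma A_comp:
  assumes X: "X \<in> alg_T a" and Y: "Y \<in> alg_T a"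
  shows "X \<circ> Y \<in> alg_T a"
  unfolding alg_T_def mem_Collect_eq op_dist_le_def
proof (intro conjI allI impI ballI)
  fix f assume "f \<in> l2"
  then show "(X \<circ> Y) f \<in> l2" using A_l2 X Y by simp
next
  fix eps :: real assume eps: "eps > 0"
  obtain B where B: "B \<ge> 0" "\<And>f. f \<in> l2 \<Longrightarrow> l2norm (Y f) \<le> B * l2norm f"
    using A_bound[OF Y] by blast
  have Bp: "0 < 2 * (B + 1)" using B by simp
  obtain p where p: "coeff p 0 = 0" "\<And>f. f \<in> l2 \<Longrightarrow> l2norm (\<lambda>n. X f n - poly_op a p f n) \<le> eps / (2 * (B + 1)) * l2norm f"
    using A_approx[OF X, of "eps / (2 * (B + 1))"] eps Bp by auto
  have Mp: "0 < 2 * (M p + 1)" using M_nonneg[of p] by simp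
  obtain q where q: "coeff q 0 = 0" "\<And>f. f \<in> l2 \<Longrightarrow> l2norm (\<lambda>n. Y f n - poly_op a q f n) \<le> eps / (2 * (M p + 1)) * l2norm f"
    using A_approx[OF Y, of "eps / (2 * (M p + 1))"] eps Mp by auto
  show "\<exists>r. coeff r 0 = 0 \<and> (\<forall>f\<in>l2. l2norm (\<lambda>n. (X \<circ> Y) f n - poly_op a r f n) \<le> eps * l2norm f)"
  proof (intro exI conjI ballI)
    show "coeff (p * q) 0 = 0" using p by (simp add: coeff_mult_0)
    fix f assume f: "f \<in> l2"
    have Yf: "Y f \<in> l2" by (rule A_l2[OF Y f])
    have qf: "poly_op a q f \<in> l2" by (rule P_l2(1)[OF f])
    have nf: "0 \<le> l2norm f" by (rule l2norm_nonneg[OF f])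
    have dq: "(\<lambda>n. Y f n - poly_op a q f n) \<in> l2" by (rule l2_diff(1)[OF Yf qf])
    have "l2norm (\<lambda>n. X (Y f) n - poly_op a p (poly_op a q f) n)
       \<le> l2norm (\<lambda>n. X (Y f) n - poly_op a p (Y f) n) + l2norm (\<lambda>n. poly_op a p (Y f) n - poly_op a p (poly_op a q f) n)"
      by (rule l2_tri3[OF A_l2[OF X Yf] P_l2(1)[OF Yf] P_l2(1)[OF qf]])
    also have "l2norm (\<lambda>n. poly_op a p (Y f) n - poly_op a p (poly_op a q f) n) = l2norm (poly_op a p (\<lambda>n. Y f n - poly_op a q f n))"
      by (metis (no_types) P_fdiff ext)
    also have "\<dots> \<le> M p * l2norm (\<lambda>n. Y f n - poly_op a q f n)" by (rule P_l2(2)[OF dq])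
    also have "\<dots> \<le> M p * (eps / (2 * (M p + 1)) * l2norm f)" by (rule mult_left_mono[OF q(2)[OF f] M_nonneg])
    also have "\<dots> \<le> eps / 2 * l2norm f"
    proof -
      have "M p * (eps / (2 * (M p + 1))) \<le> (M p + 1) * (eps / (2 * (M p + 1)))"
        by (rule mult_right_mono) (use eps Mp in auto)
      also have "\<dots> = eps / 2" using Mp by (simp add: field_simps)
      finally show ?thesis using nf by (metis mult.assoc mult_right_mono)
    qed
    also have "l2norm (\<lambda>n. X (Y f) n - poly_op a p (Y f) n) \<le> eps / (2 * (B + 1)) * l2norm (Y f)"
      by (rule p(2)[OF Yf])
    also have "\<dots> \<le> eps / (2 * (B + 1)) * (B * l2norm f)" by (rule mult_left_mono[OF B(2)[OF f]]) (use eps Bp in simp)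
    also have "\<dots> \<le> eps / 2 * l2norm f"
    proof -
      have "eps / (2 * (B + 1)) * B \<le> eps / (2 * (B + 1)) * (B + 1)"
        by (rule mult_left_mono) (use eps Bp in auto)
      also have "\<dots> = eps / 2" using Bp by (simp add: field_simps)
      finally show ?thesis using nf by (metis mult.assoc mult_right_mono)
    qed
    finally have "l2norm (\<lambda>n. X (Y f) n - poly_op a p (poly_op a q f) n) \<le> eps * l2norm f" by linarith
    then show "l2norm (\<lambda>n. (X \<circ> Y) f n - poly_op a (p * q) f n) \<le> eps * l2norm f"
      by (simp add: P_mult)
  qed
qed

end


context ws
begin

lemma HSa:
  assumes X: "X \<in> alg_T a" and Y: "Y \<in> alg_T a" and f: "f \<in> l2"
  shows "l2norm (\<lambda>n. X f n - Y f n) \<le> C * l2norm (\<lambda>n. X e0 n - Y e0 n) * l2norm f"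
proof (rule field_le_epsilon)
  fix e :: real assume e: "0 < e"
  have nf: "0 \<le> l2norm f" by (rule l2norm_nonneg[OF f])
  have e0: "e0 \<in> l2" "l2norm e0 = 1" using basis_l2 by auto
  define K where "K = (2 + 2 * C) * (l2norm f + 1)"
  have Kp: "0 < K" unfolding K_def using C_nonneg nf by (intro mult_pos_pos) auto
  define d where "d = e / K"
  have dp: "0 < d" unfolding d_def using e Kp by simp
  obtain p where p: "coeff p 0 = 0" "\<And>f. f \<in> l2 \<Longrightarrow> l2norm (\<lambda>n. X f n - poly_op a p f n) \<le> d * l2norm f"
    using A_approx[OF X dp] by blast
  obtain q where q: "coeff q 0 = 0" "\<And>f. f \<in> l2 \<Longrightarrow> l2norm (\<lambda>n. Y f n - poly_op a q f n) \<le> d * l2norm f"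
    using A_approx[OF Y dp] by blast
  define D0 where "D0 = l2norm (\<lambda>n. X e0 n - Y e0 n)"
  have r0: "coeff (p - q) 0 = 0" using p q by simp
  have rfun: "poly_op a (p - q) g = (\<lambda>n. poly_op a p g n - poly_op a q g n)" for g
    by (rule ext) (rule P_diff)
  have "l2norm (poly_op a (p - q) e0) = l2norm (\<lambda>n. poly_op a p e0 n - poly_op a q e0 n)" by (simp add: rfun)
  also have "\<dots> \<le> l2norm (\<lambda>n. poly_op a p e0 n - X e0 n) + l2norm (\<lambda>n. X e0 n - poly_op a q e0 n)"
    by (rule l2_tri3[OF P_l2(1)[OF e0(1)] A_l2[OF X e0(1)] P_l2(1)[OF e0(1)]])
  also have "l2norm (\<lambda>n. X e0 n - poly_op a q e0 n) \<le> l2norm (\<lambda>n. X e0 n - Y e0 n) + l2norm (\<lambda>n. Y e0 n - poly_op a q e0 n)"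
    by (rule l2_tri3[OF A_l2[OF X e0(1)] A_l2[OF Y e0(1)] P_l2(1)[OF e0(1)]])
  finally have re0: "l2norm (poly_op a (p - q) e0) \<le> d + D0 + d"
    using p(2)[OF e0(1)] q(2)[OF e0(1)] e0(2) l2_sym[of "\<lambda>n. poly_op a p e0 n" "\<lambda>n. X e0 n"]
    unfolding D0_def by simp
  have "l2norm (\<lambda>n. X f n - Y f n) \<le> l2norm (\<lambda>n. X f n - poly_op a p f n) + l2norm (\<lambda>n. poly_op a p f n - Y f n)"
    by (rule l2_tri3[OF A_l2[OF X f] P_l2(1)[OF f] A_l2[OF Y f]])
  also have "l2norm (\<lambda>n. poly_op a p f n - Y f n) \<le> l2norm (\<lambda>n. poly_op a p f n - poly_op a q f n) + l2norm (\<lambda>n. poly_op a q f n - Y f n)"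
    by (rule l2_tri3[OF P_l2(1)[OF f] P_l2(1)[OF f] A_l2[OF Y f]])
  also have "l2norm (\<lambda>n. poly_op a p f n - poly_op a q f n) = l2norm (poly_op a (p - q) f)" by (simp add: rfun)
  also have "\<dots> \<le> C * l2norm (poly_op a (p - q) e0) * l2norm f" by (rule HSp[OF r0 f])
  also have "\<dots> \<le> C * (d + D0 + d) * l2norm f"
    by (intro mult_right_mono mult_left_mono re0 C_nonneg nf)
  also have "l2norm (\<lambda>n. poly_op a q f n - Y f n) = l2norm (\<lambda>n. Y f n - poly_op a q f n)" by (rule l2_sym)
  finally have "l2norm (\<lambda>n. X f n - Y f n) \<le> d * l2norm f + (C * (d + D0 + d) * l2norm f + d * l2norm f)"
    using p(2)[OF f] q(2)[OF f] by linarith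
  also have "\<dots> = C * D0 * l2norm f + d * ((2 + 2 * C) * l2norm f)" by (simp add: algebra_simps)
  also have "d * ((2 + 2 * C) * l2norm f) \<le> e"
  proof -
    have "d * ((2 + 2 * C) * l2norm f) \<le> d * K"
      unfolding K_def using dp C_nonneg nf by (intro mult_left_mono mult_left_mono) auto
    also have "\<dots> = e" unfolding d_def using Kp by simp
    finally show ?thesis .
  qed
  finally show "l2norm (\<lambda>n. X f n - Y f n) \<le> C * l2norm (\<lambda>n. X e0 n - Y e0 n) * l2norm f + e"
    unfolding D0_def by simp
qed

lemma Comm:
  assumes X: "X \<in> alg_T a" and A: "A \<in> alg_T a"
  shows "X (A e0) = A (X e0)"
proof -
  have e0: "e0 \<in> l2" "l2norm e0 = 1" using basis_l2 by auto
  define u where "u = A e0"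
  define w where "w = X e0"
  have u: "u \<in> l2" unfolding u_def by (rule A_l2[OF A e0(1)])
  have w: "w \<in> l2" unfolding w_def by (rule A_l2[OF X e0(1)])
  have nu: "0 \<le> l2norm u" by (rule l2norm_nonneg[OF u])
  have nw: "0 \<le> l2norm w" by (rule l2norm_nonneg[OF w])
  have "X u = A w"
  proof (rule l2_eq_if_small[OF A_l2[OF X u] A_l2[OF A w]])
    fix e :: real assume e: "0 < e"
    define K where "K = l2norm u + C * (l2norm w + 1) + C * (l2norm u + 1) + l2norm w + 1"
    have Kp: "0 < K" unfolding K_def using nu nw C_nonneg by (simp add: add_nonneg_pos)
    define d where "d = min 1 (e / K)"
    have dp: "0 < d" unfolding d_def using e Kp by simp
    have d1: "d \<le> 1" unfolding d_def by simp
    have dK: "d * K \<le> e" unfolding d_def using Kp e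
      by (metis min.cobounded2 mult_right_mono less_eq_real_def nonzero_eq_divide_eq order_less_irrefl divide_pos_pos mult.commute pos_le_divide_eq)
    obtain p where p: "coeff p 0 = 0" "\<And>f. f \<in> l2 \<Longrightarrow> l2norm (\<lambda>n. X f n - poly_op a p f n) \<le> d * l2norm f"
      using A_approx[OF X dp] by blast
    obtain q where q: "coeff q 0 = 0" "\<And>f. f \<in> l2 \<Longrightarrow> l2norm (\<lambda>n. A f n - poly_op a q f n) \<le> d * l2norm f"
      using A_approx[OF A dp] by blast
    have pe0: "poly_op a p e0 \<in> l2" and qe0: "poly_op a q e0 \<in> l2" using P_l2(1)[OF e0(1)] by auto
    have pu: "poly_op a p u \<in> l2" using P_l2(1)[OF u] .
    have qw: "poly_op a q w \<in> l2" using P_l2(1)[OF w] .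
    have qpe0: "poly_op a q (poly_op a p e0) \<in> l2" using P_l2(1)[OF pe0] .
    have dw: "l2norm (\<lambda>n. w n - poly_op a p e0 n) \<le> d" using p(2)[OF e0(1)] e0(2) unfolding w_def by simp
    have du: "l2norm (\<lambda>n. u n - poly_op a q e0 n) \<le> d" using q(2)[OF e0(1)] e0(2) unfolding u_def by simp
    have npe0: "l2norm (poly_op a p e0) \<le> l2norm w + 1"
    proof -
      have "l2norm (poly_op a p e0) \<le> l2norm (\<lambda>n. poly_op a p e0 n - w n) + l2norm w"
        by (rule l2_tri_gen(2)[OF l2_diff(1)[OF pe0 w] w]) (rule tri_sub)
      then show ?thesis using dw d1 l2_sym[of "poly_op a p e0" w] by simp
    qed
    have nqe0: "l2norm (poly_op a q e0) \<le> l2norm u + 1"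
    proof -
      have "l2norm (poly_op a q e0) \<le> l2norm (\<lambda>n. poly_op a q e0 n - u n) + l2norm u"
        by (rule l2_tri_gen(2)[OF l2_diff(1)[OF qe0 u] u]) (rule tri_sub)
      then show ?thesis using du d1 l2_sym[of "poly_op a q e0" u] by simp
    qed
    have pc: "poly_op a p (poly_op a q e0) = poly_op a q (poly_op a p e0)" by (rule P_comm)
    have t2: "l2norm (\<lambda>n. poly_op a p u n - poly_op a q (poly_op a p e0) n) \<le> C * (l2norm w + 1) * d"
    proof -
      have "(\<lambda>n. poly_op a p u n - poly_op a q (poly_op a p e0) n) = poly_op a p (\<lambda>n. u n - poly_op a q e0 n)"
        by (rule ext) (simp add: P_fdiff pc[symmetric])
      then have "l2norm (\<lambda>n. poly_op a p u n - poly_op a q (poly_op a p e0) n) \<le> C * l2norm (poly_op a p e0) * l2norm (\<lambda>n. u n - poly_op a q e0 n)"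
        using HSp[OF p(1) l2_diff(1)[OF u qe0]] by simp
      also have "\<dots> \<le> C * (l2norm w + 1) * d"
        by (intro mult_mono mult_left_mono npe0 du C_nonneg) (use nw C_nonneg l2norm_nonneg[OF pe0] l2norm_nonneg[OF l2_diff(1)[OF u qe0]] in auto)
      finally show ?thesis .
    qed
    have t3: "l2norm (\<lambda>n. poly_op a q (poly_op a p e0) n - poly_op a q w n) \<le> C * (l2norm u + 1) * d"
    proof -
      have "(\<lambda>n. poly_op a q (poly_op a p e0) n - poly_op a q w n) = poly_op a q (\<lambda>n. poly_op a p e0 n - w n)"
        by (rule ext) (simp add: P_fdiff)
      then have "l2norm (\<lambda>n. poly_op a q (poly_op a p e0) n - poly_op a q w n) \<le> C * l2norm (poly_op a q e0) * l2norm (\<lambda>n. poly_op a p e0 n - w n)"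
        using HSp[OF q(1) l2_diff(1)[OF pe0 w]] by simp
      also have "\<dots> \<le> C * (l2norm u + 1) * d"
        using dw l2_sym[of "poly_op a p e0" w]
        by (intro mult_mono mult_left_mono nqe0 C_nonneg) (use nu dp C_nonneg l2norm_nonneg[OF qe0] l2norm_nonneg[OF l2_diff(1)[OF pe0 w]] in auto)
      finally show ?thesis .
    qed
    have t1: "l2norm (\<lambda>n. X u n - poly_op a p u n) \<le> d * l2norm u" by (rule p(2)[OF u])
    have t4: "l2norm (\<lambda>n. poly_op a q w n - A w n) \<le> d * l2norm w"
      using q(2)[OF w] l2_sym[of "poly_op a q w" "A w"] by simp
    have "l2norm (\<lambda>n. X u n - A w n) \<le> l2norm (\<lambda>n. X u n - poly_op a p u n) + l2norm (\<lambda>n. poly_op a p u n - A w n)"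
      by (rule l2_tri3[OF A_l2[OF X u] pu A_l2[OF A w]])
    also have "l2norm (\<lambda>n. poly_op a p u n - A w n) \<le> l2norm (\<lambda>n. poly_op a p u n - poly_op a q (poly_op a p e0) n) + l2norm (\<lambda>n. poly_op a q (poly_op a p e0) n - A w n)"
      by (rule l2_tri3[OF pu qpe0 A_l2[OF A w]])
    also have "l2norm (\<lambda>n. poly_op a q (poly_op a p e0) n - A w n) \<le> l2norm (\<lambda>n. poly_op a q (poly_op a p e0) n - poly_op a q w n) + l2norm (\<lambda>n. poly_op a q w n - A w n)"
      by (rule l2_tri3[OF qpe0 qw A_l2[OF A w]])
    finally have "l2norm (\<lambda>n. X u n - A w n) \<le> d * l2norm u + (C * (l2norm w + 1) * d + (C * (l2norm u + 1) * d + d * l2norm w))"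
      using t1 t2 t3 t4 by linarith
    also have "\<dots> \<le> d * K" unfolding K_def using dp by (simp add: algebra_simps)
    also have "\<dots> \<le> e" by (rule dK)
    finally show "l2norm (\<lambda>n. X u n - A w n) \<le> e" .
  qed
  then show ?thesis by (simp add: u_def w_def)
qed

end


context ws
begin

definition cspan :: "(nat \<Rightarrow> complex) \<Rightarrow> (nat \<Rightarrow> complex) \<Rightarrow> bool" where
  "cspan v x \<longleftrightarrow> (\<forall>eps>0. \<exists>P. l2norm (\<lambda>n. x n - poly_op a P v n) < eps)"

lemma P_sum_monom: "poly_op a (\<Sum>m<N. monom (c m) m) v n = (\<Sum>m<N. c m * (T ^^ m) v n)"
proof (induction N)
  case 0 then show ?case by (simp add: P_zero)
next
  case (Suc N) then show ?case by (simp add: P_add P_monom)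
qed

lemma cspan_sumform:
  "cspan v x \<longleftrightarrow> (\<forall>eps>0. \<exists>N c. l2norm (\<lambda>n. x n - (\<Sum>m<N. c m * (T ^^ m) v n)) < eps)"
  unfolding cspan_def
proof (intro iffI allI impI)
  fix eps :: real assume H: "\<forall>eps>0. \<exists>P. l2norm (\<lambda>n. x n - poly_op a P v n) < eps" and e: "eps > 0"
  then obtain P where "l2norm (\<lambda>n. x n - poly_op a P v n) < eps" by blast
  then show "\<exists>N c. l2norm (\<lambda>n. x n - (\<Sum>m<N. c m * (T ^^ m) v n)) < eps"
    using P1'[of P v] by (intro exI[of _ "Suc (degree P)"] exI[of _ "coeff P"]) simp
next
  fix eps :: real assume H: "\<forall>eps>0. \<exists>N c. l2norm (\<lambda>n. x n - (\<Sum>m<N. c m * (T ^^ m) v n)) < eps" and e: "eps > 0"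
  then obtain N c where "l2norm (\<lambda>n. x n - (\<Sum>m<N. c m * (T ^^ m) v n)) < eps" by blast
  then show "\<exists>P. l2norm (\<lambda>n. x n - poly_op a P v n) < eps"
    by (intro exI[of _ "\<Sum>m<N. monom (c m) m"]) (simp add: P_sum_monom)
qed

lemma cs_zero: "cspan v (\<lambda>n. 0)"
  unfolding cspan_def by (intro allI impI exI[of _ 0]) (simp add: P_zero)

lemma cs_self: "cspan v v"
  unfolding cspan_def by (intro allI impI exI[of _ "[:1:]"]) (simp add: P_const)

lemma cs_add:
  assumes v: "v \<in> l2" and x: "x \<in> l2" "cspan v x" and y: "y \<in> l2" "cspan v y"
  shows "cspan v (\<lambda>n. x n + y n)"
  unfolding cspan_def
proof (intro allI impI)
  fix eps :: real assume e: "eps > 0"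
  obtain P where P: "l2norm (\<lambda>n. x n - poly_op a P v n) < eps / 2" using x(2) e unfolding cspan_def by (meson half_gt_zero)
  obtain Q where Q: "l2norm (\<lambda>n. y n - poly_op a Q v n) < eps / 2" using y(2) e unfolding cspan_def by (meson half_gt_zero)
  have "l2norm (\<lambda>n. (x n + y n) - poly_op a (P + Q) v n) \<le> l2norm (\<lambda>n. x n - poly_op a P v n) + l2norm (\<lambda>n. y n - poly_op a Q v n)"
    by (rule l2_tri_gen(2)[OF l2_diff(1)[OF x(1) P_l2(1)[OF v]] l2_diff(1)[OF y(1) P_l2(1)[OF v]]]) (simp only: P_add tri2)
  then show "\<exists>R. l2norm (\<lambda>n. (x n + y n) - poly_op a R v n) < eps" using P Q by (intro exI[of _ "P + Q"]) linarith
qed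

lemma cs_scale:
  assumes v: "v \<in> l2" and x: "x \<in> l2" "cspan v x"
  shows "cspan v (\<lambda>n. c * x n)"
  unfolding cspan_def
proof (intro allI impI)
  fix eps :: real assume e: "eps > 0"
  have cp: "0 < cmod c + 1" by (simp add: add_nonneg_pos)
  obtain P where P: "l2norm (\<lambda>n. x n - poly_op a P v n) < eps / (cmod c + 1)"
    using x(2) e cp unfolding cspan_def by (meson divide_pos_pos)
  have d: "(\<lambda>n. x n - poly_op a P v n) \<in> l2" by (rule l2_diff(1)[OF x(1) P_l2(1)[OF v]])
  have eq: "(\<lambda>n. c * x n - poly_op a (smult c P) v n) = (\<lambda>n. c * (x n - poly_op a P v n))"
    by (simp add: P_smult right_diff_distrib)
  have "l2norm (\<lambda>n. c * x n - poly_op a (smult c P) v n) = cmod c * l2norm (\<lambda>n. x n - poly_op a P v n)"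
    unfolding eq by (rule l2_scale(2)[OF d])
  also have "\<dots> \<le> (cmod c + 1) * l2norm (\<lambda>n. x n - poly_op a P v n)"
    by (rule mult_right_mono) (use l2norm_nonneg[OF d] in auto)
  also have "\<dots> < (cmod c + 1) * (eps / (cmod c + 1))" by (rule mult_strict_left_mono[OF P cp])
  also have "\<dots> = eps" using cp by simp
  finally show "\<exists>R. l2norm (\<lambda>n. c * x n - poly_op a R v n) < eps" by blast
qed

lemma cs_closed:
  assumes x: "x \<in> l2" and H: "\<And>e. e > 0 \<Longrightarrow> \<exists>y. y \<in> l2 \<and> cspan v y \<and> l2norm (\<lambda>n. x n - y n) \<le> e"
    and v: "v \<in> l2"
  shows "cspan v x"
  unfolding cspan_def
proof (intro allI impI)
  fix eps :: real assume e: "eps > 0"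
  obtain y where y: "y \<in> l2" "cspan v y" "l2norm (\<lambda>n. x n - y n) \<le> eps / 2" using H[of "eps/2"] e by auto
  obtain P where P: "l2norm (\<lambda>n. y n - poly_op a P v n) < eps / 2" using y(2) e unfolding cspan_def by (meson half_gt_zero)
  have "l2norm (\<lambda>n. x n - poly_op a P v n) \<le> l2norm (\<lambda>n. x n - y n) + l2norm (\<lambda>n. y n - poly_op a P v n)"
    by (rule l2_tri3[OF x y(1) P_l2(1)[OF v]])
  then show "\<exists>P. l2norm (\<lambda>n. x n - poly_op a P v n) < eps" using y(3) P by (intro exI[of _ P]) linarith
qed

lemma cs_apply:
  assumes A: "A \<in> alg_T a" and v: "v \<in> l2" and x: "x \<in> l2" "cspan v x"
  shows "cspan v (A x)"
  unfolding cspan_def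
proof (intro allI impI)
  fix eps :: real assume e: "eps > 0"
  have nx: "0 \<le> l2norm x" by (rule l2norm_nonneg[OF x(1)])
  have xp: "0 < 2 * (l2norm x + 1)" using nx by simp
  obtain p where p: "coeff p 0 = 0" "\<And>f. f \<in> l2 \<Longrightarrow> l2norm (\<lambda>n. A f n - poly_op a p f n) \<le> eps / (2 * (l2norm x + 1)) * l2norm f"
    using A_approx[OF A, of "eps / (2 * (l2norm x + 1))"] e xp by auto
  have Mp: "0 < 2 * (M p + 1)" using M_nonneg[of p] by simp
  obtain P where P: "l2norm (\<lambda>n. x n - poly_op a P v n) < eps / (2 * (M p + 1))"
    using x(2) e Mp unfolding cspan_def by (meson divide_pos_pos)
  have Pv: "poly_op a P v \<in> l2" by (rule P_l2(1)[OF v])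
  have d: "(\<lambda>n. x n - poly_op a P v n) \<in> l2" by (rule l2_diff(1)[OF x(1) Pv])
  have t1: "l2norm (\<lambda>n. A x n - poly_op a p x n) \<le> eps / 2"
  proof -
    have "l2norm (\<lambda>n. A x n - poly_op a p x n) \<le> eps / (2 * (l2norm x + 1)) * l2norm x" by (rule p(2)[OF x(1)])
    also have "\<dots> \<le> eps / (2 * (l2norm x + 1)) * (l2norm x + 1)" by (rule mult_left_mono) (use e xp in auto)
    also have "\<dots> = eps / 2" using xp by (simp add: field_simps)
    finally show ?thesis .
  qed
  have t2: "l2norm (\<lambda>n. poly_op a p x n - poly_op a p (poly_op a P v) n) < eps / 2"
  proof -
    have eq: "(\<lambda>n. poly_op a p x n - poly_op a p (poly_op a P v) n) = poly_op a p (\<lambda>n. x n - poly_op a P v n)"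
      by (rule ext) (simp add: P_fdiff)
    have "l2norm (poly_op a p (\<lambda>n. x n - poly_op a P v n)) \<le> M p * l2norm (\<lambda>n. x n - poly_op a P v n)"
      by (rule P_l2(2)[OF d])
    also have "\<dots> \<le> (M p + 1) * l2norm (\<lambda>n. x n - poly_op a P v n)"
      by (rule mult_right_mono) (use l2norm_nonneg[OF d] in auto)
    also have "\<dots> < (M p + 1) * (eps / (2 * (M p + 1)))" by (rule mult_strict_left_mono[OF P]) (use Mp in simp)
    also have "\<dots> = eps / 2" using Mp by (simp add: field_simps)
    finally show ?thesis unfolding eq .
  qed
  have "l2norm (\<lambda>n. A x n - poly_op a p (poly_op a P v) n) \<le> l2norm (\<lambda>n. A x n - poly_op a p x n) + l2norm (\<lambda>n. poly_op a p x n - poly_op a p (poly_op a P v) n)"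
    by (rule l2_tri3[OF A_l2[OF A x(1)] P_l2(1)[OF x(1)] P_l2(1)[OF Pv]])
  then have "l2norm (\<lambda>n. A x n - poly_op a (p * P) v n) < eps" using t1 t2 by (simp add: P_mult)
  then show "\<exists>R. l2norm (\<lambda>n. A x n - poly_op a R v n) < eps" by blast
qed

definition J0 :: "((nat \<Rightarrow> complex) \<Rightarrow> (nat \<Rightarrow> complex)) \<Rightarrow> ((nat \<Rightarrow> complex) \<Rightarrow> (nat \<Rightarrow> complex)) set" where
  "J0 R = {X \<in> alg_T a. cspan (R e0) (X e0)}"

lemma e0_l2: "e0 \<in> l2" by (rule basis_l2(1))

lemma J0_ideal:
  assumes R: "R \<in> alg_T a"
  shows "closed_ideal a (J0 R)"
proof -
  have v: "R e0 \<in> l2" by (rule A_l2[OF R e0_l2])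
  have Xe: "X e0 \<in> l2" if "X \<in> J0 R" for X using that A_l2 e0_l2 by (auto simp: J0_def)
  show ?thesis
    unfolding closed_ideal_def
  proof (intro conjI ballI allI impI)
    show "J0 R \<subseteq> alg_T a" by (auto simp: J0_def)
    show "(\<lambda>f n. 0) \<in> J0 R" by (simp add: J0_def zero_in_A cs_zero)
  next
    fix S Q assume S: "S \<in> J0 R" and Q: "Q \<in> J0 R"
    then show "(\<lambda>f n. S f n + Q f n) \<in> J0 R"
      using A_add cs_add[OF v Xe[OF S] _ Xe[OF Q]] by (auto simp: J0_def)
  next
    fix c S assume S: "S \<in> J0 R"
    then show "(\<lambda>f n. c * S f n) \<in> J0 R"
      using A_scale cs_scale[OF v Xe[OF S]] by (auto simp: J0_def)
  next
    fix S A assume S: "S \<in> J0 R" and A: "A \<in> alg_T a"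
    have SA: "S \<in> alg_T a" "cspan (R e0) (S e0)" using S by (auto simp: J0_def)
    have c1: "cspan (R e0) (A (S e0))" by (rule cs_apply[OF A v Xe[OF S] SA(2)])
    show "A \<circ> S \<in> J0 R" using A_comp[OF A SA(1)] c1 by (simp add: J0_def)
    show "S \<circ> A \<in> J0 R" using A_comp[OF SA(1) A] c1 Comm[OF SA(1) A] by (simp add: J0_def)
  next
    fix S assume S: "S \<in> alg_T a" and H: "\<forall>eps>0. \<exists>Q\<in>J0 R. op_dist_le S Q eps"
    have "cspan (R e0) (S e0)"
    proof (rule cs_closed[OF A_l2[OF S e0_l2] _ v])
      fix e :: real assume e: "e > 0"
      obtain Q where Q: "Q \<in> J0 R" "op_dist_le S Q e" using H e by blast
      have "l2norm (\<lambda>n. S e0 n - Q e0 n) \<le> e * l2norm e0" using Q(2) e0_l2 by (simp add: op_dist_le_def)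
      then show "\<exists>y. y \<in> l2 \<and> cspan (R e0) y \<and> l2norm (\<lambda>n. S e0 n - y n) \<le> e"
        using Q(1) Xe[OF Q(1)] basis_l2(2) by (intro exI[of _ "Q e0"]) (simp add: J0_def)
    qed
    then show "S \<in> J0 R" using S by (simp add: J0_def)
  qed
qed

lemma gen_le: "closed_ideal a J \<Longrightarrow> R \<in> J \<Longrightarrow> gen_ideal a R \<subseteq> J"
  unfolding gen_ideal_def by blast

lemma R_in_J0: "R \<in> alg_T a \<Longrightarrow> R \<in> J0 R"
  by (simp add: J0_def cs_self)

lemma J0_sub:
  assumes J: "closed_ideal a J" and R: "R \<in> J"
  shows "J0 R \<subseteq> J"
proof
  fix X assume X: "X \<in> J0 R"
  have JA: "J \<subseteq> alg_T a" using J by (simp add: closed_ideal_def)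
  have RA: "R \<in> alg_T a" using R JA by blast
  have XA: "X \<in> alg_T a" and Xc: "cspan (R e0) (X e0)" using X by (auto simp: J0_def)
  have Jsum: "\<And>S Q. S \<in> J \<Longrightarrow> Q \<in> J \<Longrightarrow> (\<lambda>f n. S f n + Q f n) \<in> J"
    and Jsc: "\<And>c S. S \<in> J \<Longrightarrow> (\<lambda>f n. c * S f n) \<in> J"
    and Jcomp: "\<And>S A. S \<in> J \<Longrightarrow> A \<in> alg_T a \<Longrightarrow> A \<circ> S \<in> J"
    and Jcl: "\<And>S. S \<in> alg_T a \<Longrightarrow> (\<forall>eps>0. \<exists>Q\<in>J. op_dist_le S Q eps) \<Longrightarrow> S \<in> J"
    using J unfolding closed_ideal_def by blast+
  have PR: "(\<lambda>f n. poly_op a P (R f) n) \<in> J" for P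
  proof -
    define c where "c = coeff P 0"
    define P' where "P' = P - [:c:]"
    have P'0: "coeff P' 0 = 0" by (simp add: P'_def c_def)
    have eq: "(\<lambda>f n. poly_op a P (R f) n) = (\<lambda>f n. (\<lambda>f n. c * R f n) f n + (poly_op a P' \<circ> R) f n)"
      by (intro ext) (simp add: P'_def P_diff P_const)
    show ?thesis unfolding eq by (rule Jsum[OF Jsc[OF R] Jcomp[OF R poly_in_A[OF P'0]]])
  qed
  show "X \<in> J"
  proof (rule Jcl[OF XA], intro allI impI)
    fix eps :: real assume e: "eps > 0"
    have Cp: "0 < C + 1" using C_nonneg by simp
    obtain P where P: "l2norm (\<lambda>n. X e0 n - poly_op a P (R e0) n) < eps / (C + 1)"
      using Xc e Cp unfolding cspan_def by (meson divide_pos_pos)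
    define Y where "Y = (\<lambda>f n. poly_op a P (R f) n)"
    have YJ: "Y \<in> J" unfolding Y_def by (rule PR)
    have YA: "Y \<in> alg_T a" using YJ JA by blast
    have "op_dist_le X Y eps"
      unfolding op_dist_le_def
    proof
      fix f assume f: "f \<in> l2"
      have nf: "0 \<le> l2norm f" by (rule l2norm_nonneg[OF f])
      have "l2norm (\<lambda>n. X f n - Y f n) \<le> C * l2norm (\<lambda>n. X e0 n - Y e0 n) * l2norm f"
        by (rule HSa[OF XA YA f])
      also have "\<dots> \<le> (C + 1) * (eps / (C + 1)) * l2norm f"
        using P C_nonneg nf l2norm_nonneg[OF l2_diff(1)[OF A_l2[OF XA e0_l2] A_l2[OF YA e0_l2]]]
        by (intro mult_right_mono mult_mono) (auto simp: Y_def)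
      also have "\<dots> = eps * l2norm f" using Cp by simp
      finally show "l2norm (\<lambda>n. X f n - Y f n) \<le> eps * l2norm f" .
    qed
    then show "\<exists>Q\<in>J. op_dist_le X Q eps" using YJ by blast
  qed
qed

lemma gen_eq_J0: "R \<in> alg_T a \<Longrightarrow> gen_ideal a R = J0 R"
proof
  assume R: "R \<in> alg_T a"
  show "gen_ideal a R \<subseteq> J0 R" by (rule gen_le[OF J0_ideal[OF R] R_in_J0[OF R]])
  show "J0 R \<subseteq> gen_ideal a R" unfolding gen_ideal_def using J0_sub by blast
qed

end


lemma cis_prod: "cis t ^ i * cnj (cis t) ^ j = exp (t *\<^sub>R (\<i> * of_int (int i - int j)))"
proof -
  have "cis t ^ i * cnj (cis t) ^ j = cis (real i * t + real j * (- t))"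
    unfolding cis_cnj Complex.DeMoivre cis_mult ..
  also have "\<dots> = exp (\<i> * complex_of_real (real i * t + real j * (- t)))" by (rule cis_conv_exp)
  also have "\<i> * complex_of_real (real i * t + real j * (- t)) = t *\<^sub>R (\<i> * of_int (int i - int j))"
    by (simp add: scaleR_conv_of_real algebra_simps)
  finally show ?thesis .
qed

lemma int_E: "((\<lambda>t. exp (t *\<^sub>R (\<i> * of_int k))) has_integral (if k = 0 then of_real (2*pi) else 0)) {0..2*pi}"
proof (cases "k = 0")
  case True
  then show ?thesis using has_integral_const_real[of "1::complex" 0 "2*pi"]
    by (simp add: scaleR_conv_of_real)
next
  case False
  define c where "c = \<i> * of_int k"
  have c: "c \<noteq> 0" using False by (simp add: c_def)
  have d: "((\<lambda>t. (1 / c) * exp (t *\<^sub>R c)) has_vector_derivative exp (x *\<^sub>R c)) (at x within {0..2*pi})" for x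
  proof -
    have "((\<lambda>t. (1 / c) * exp (t *\<^sub>R c)) has_vector_derivative (1 / c) * (exp (x *\<^sub>R c) * c)) (at x within {0..2*pi})"
      by (rule has_vector_derivative_mult_right[OF exp_scaleR_has_vector_derivative_right])
    then show ?thesis using c by simp
  qed
  have "((\<lambda>t. exp (t *\<^sub>R c)) has_integral ((1 / c) * exp ((2*pi) *\<^sub>R c) - (1 / c) * exp (0 *\<^sub>R c))) {0..2*pi}"
    by (rule fundamental_theorem_of_calculus) (use d in auto)
  moreover have "exp ((2*pi) *\<^sub>R c) = 1"
  proof -
    have "exp ((2*pi) *\<^sub>R c) = cis (2 * pi * of_int k)"
      by (simp add: cis_conv_exp c_def scaleR_conv_of_real algebra_simps)
    also have "\<dots> = 1" by (rule cis_multiple_2pi) simp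
    finally show ?thesis .
  qed
  ultimately show ?thesis using False by (simp add: c_def)
qed

lemma int_cis: "((\<lambda>t. cis t ^ i * cnj (cis t) ^ j) has_integral (if i = j then of_real (2*pi) else 0)) {0..2*pi}"
  using int_E[of "int i - int j"] unfolding cis_prod by simp

context ws
begin

lemma gauge_apply: "gauge_act l X f = (\<lambda>n. l ^ n * X (\<lambda>m. cnj l ^ m * f m) n)"
  by (simp add: gauge_act_def)

lemma cis_unit: "cmod (cis t) = 1" by simp

lemma unit_cnj: "cmod l = 1 \<Longrightarrow> l * cnj l = 1"
  using complex_norm_square[of l] by simp

lemma Wstar_l2:
  assumes "cmod l = 1" "f \<in> l2"
  shows "(\<lambda>m. cnj l ^ m * f m) \<in> l2" "l2norm (\<lambda>m. cnj l ^ m * f m) = l2norm f"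
proof -
  have e: "cmod (cnj l ^ m * f m) = cmod (f m)" for m using assms(1) by (simp add: norm_mult norm_power)
  show "(\<lambda>m. cnj l ^ m * f m) \<in> l2" using l2_cong_norm(1)[of "\<lambda>m. cnj l ^ m * f m" f] e assms(2) by simp
  show "l2norm (\<lambda>m. cnj l ^ m * f m) = l2norm f" using l2_cong_norm(2)[of "\<lambda>m. cnj l ^ m * f m" f] e by simp
qed

lemma W_l2:
  assumes "cmod l = 1" "h \<in> l2"
  shows "(\<lambda>n. l ^ n * h n) \<in> l2" "l2norm (\<lambda>n. l ^ n * h n) = l2norm h"
proof -
  have e: "cmod (l ^ m * h m) = cmod (h m)" for m using assms(1) by (simp add: norm_mult norm_power)
  show "(\<lambda>n. l ^ n * h n) \<in> l2" using l2_cong_norm(1)[of "\<lambda>m. l ^ m * h m" h] e assms(2) by simp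
  show "l2norm (\<lambda>n. l ^ n * h n) = l2norm h" using l2_cong_norm(2)[of "\<lambda>m. l ^ m * h m" h] e by simp
qed

lemma TW:
  assumes l: "cmod l = 1"
  shows "l ^ n * (T ^^ i) (\<lambda>m. cnj l ^ m * f m) n = l ^ i * (T ^^ i) f n"
proof (cases "i \<le> n")
  case True
  have ln: "l ^ n = l ^ i * l ^ (n - i)" using True by (simp add: power_add[symmetric])
  have "l ^ (n - i) * cnj l ^ (n - i) = 1" using unit_cnj[OF l] by (simp add: power_mult_distrib[symmetric])
  then have "l ^ n * cnj l ^ (n - i) = l ^ i" unfolding ln by (simp add: mult.assoc)
  then show ?thesis using True by (simp add: Tform)
next
  case False then show ?thesis by (simp add: Tform)
qed

lemma gauge_poly:
  assumes l: "cmod l = 1" and D: "degree q < D"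
  shows "gauge_act l (poly_op a q) f = (\<lambda>n. \<Sum>i<D. (coeff q i * l ^ i) * (T ^^ i) f n)"
proof
  fix n
  have "gauge_act l (poly_op a q) f n = l ^ n * (\<Sum>i<D. coeff q i * (T ^^ i) (\<lambda>m. cnj l ^ m * f m) n)"
    unfolding gauge_apply P1[OF D] ..
  also have "\<dots> = (\<Sum>i<D. coeff q i * (l ^ n * (T ^^ i) (\<lambda>m. cnj l ^ m * f m) n))"
    by (simp add: sum_distrib_left mult_ac)
  also have "\<dots> = (\<Sum>i<D. (coeff q i * l ^ i) * (T ^^ i) f n)"
    unfolding TW[OF l] by (simp add: mult_ac)
  finally show "gauge_act l (poly_op a q) f n = (\<Sum>i<D. (coeff q i * l ^ i) * (T ^^ i) f n)" .
qed

lemma inner_gauge_poly: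
  assumes l: "cmod l = 1" and D: "degree q < D" and f: "f \<in> l2" and g: "g \<in> l2"
  shows "l2inner (gauge_act l (poly_op a q) f) g = (\<Sum>i<D. (coeff q i * l ^ i) * l2inner ((T ^^ i) f) g)"
  unfolding gauge_poly[OF l D]
  by (rule l2inner_sum[OF _ _ g]) (use T_l2[OF f] in auto)

lemma G_integral:
  assumes D: "degree q < D" "j < D" and f: "f \<in> l2" and g: "g \<in> l2"
  shows "((\<lambda>t. l2inner (gauge_act (cis t) (poly_op a q) f) g * cnj (cis t) ^ j) has_integral
          (of_real (2*pi) * (coeff q j * l2inner ((T ^^ j) f) g))) {0..2*pi}"
proof -
  define L where "L i = l2inner ((T ^^ i) f) g" for i
  have eq: "(\<lambda>t. l2inner (gauge_act (cis t) (poly_op a q) f) g * cnj (cis t) ^ j)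
      = (\<lambda>t. \<Sum>i<D. (coeff q i * L i) * (cis t ^ i * cnj (cis t) ^ j))"
  proof
    fix t
    show "l2inner (gauge_act (cis t) (poly_op a q) f) g * cnj (cis t) ^ j = (\<Sum>i<D. (coeff q i * L i) * (cis t ^ i * cnj (cis t) ^ j))"
      unfolding inner_gauge_poly[OF cis_unit D(1) f g] L_def by (simp add: sum_distrib_left sum_distrib_right mult_ac)
  qed
  have "((\<lambda>t. \<Sum>i<D. (coeff q i * L i) * (cis t ^ i * cnj (cis t) ^ j)) has_integral
          (\<Sum>i<D. (coeff q i * L i) * (if i = j then of_real (2*pi) else 0))) {0..2*pi}"
    by (rule has_integral_sum[OF finite_lessThan], rule has_integral_mult_right, rule int_cis)
  moreover have "(\<Sum>i<D. (coeff q i * L i) * (if i = j then of_real (2*pi) else 0)) = of_real (2*pi) * (coeff q j * L j)"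
    using D(2) by (simp add: if_distrib sum.delta' cong: if_cong)
  ultimately show ?thesis unfolding eq L_def by simp
qed

lemma F_diff_bound:
  assumes X: "X \<in> alg_T a" and q: "\<And>h. h \<in> l2 \<Longrightarrow> l2norm (\<lambda>n. X h n - poly_op a q h n) \<le> d * l2norm h"
    and f: "f \<in> l2" and g: "g \<in> l2"
  shows "cmod (l2inner (gauge_act (cis t) X f) g * cnj (cis t) ^ j - l2inner (gauge_act (cis t) (poly_op a q) f) g * cnj (cis t) ^ j)
         \<le> d * l2norm f * l2norm g"
proof -
  define l where "l = cis t"
  have l: "cmod l = 1" by (simp add: l_def)
  define h where "h = (\<lambda>m. cnj l ^ m * f m)"
  have h: "h \<in> l2" "l2norm h = l2norm f" unfolding h_def using Wstar_l2[OF l f] by auto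
  have Xh: "X h \<in> l2" by (rule A_l2[OF X h(1)])
  have qh: "poly_op a q h \<in> l2" by (rule P_l2(1)[OF h(1)])
  have gX: "gauge_act l X f = (\<lambda>n. l ^ n * X h n)" unfolding gauge_apply h_def ..
  have gq: "gauge_act l (poly_op a q) f = (\<lambda>n. l ^ n * poly_op a q h n)" unfolding gauge_apply h_def ..
  have dl: "(\<lambda>n. X h n - poly_op a q h n) \<in> l2" by (rule l2_diff(1)[OF Xh qh])
  have e1: "(\<lambda>n. l ^ n * X h n - l ^ n * poly_op a q h n) = (\<lambda>n. l ^ n * (X h n - poly_op a q h n))"
    by (simp add: right_diff_distrib)
  have "l2inner (gauge_act l X f) g - l2inner (gauge_act l (poly_op a q) f) g
      = l2inner (\<lambda>n. l ^ n * (X h n - poly_op a q h n)) g"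
    unfolding gX gq e1[symmetric] by (rule l2inner_diff[OF W_l2(1)[OF l Xh] W_l2(1)[OF l qh] g, symmetric])
  moreover have "cmod (l2inner (\<lambda>n. l ^ n * (X h n - poly_op a q h n)) g) \<le> l2norm (\<lambda>n. X h n - poly_op a q h n) * l2norm g"
    using l2inner_bound[OF W_l2(1)[OF l dl] g] W_l2(2)[OF l dl] by simp
  moreover have "l2norm (\<lambda>n. X h n - poly_op a q h n) * l2norm g \<le> d * l2norm f * l2norm g"
    using q[OF h(1)] h(2) l2norm_nonneg[OF g] by (simp add: mult_right_mono)
  moreover have "cmod (cnj l ^ j) = 1" using l by (simp add: norm_power)
  ultimately show ?thesis unfolding l_def[symmetric]
    by (simp add: left_diff_distrib[symmetric] norm_mult)
qed

end


context ws
begin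

lemma coeff_close:
  assumes X: "X \<in> alg_T a" and q: "\<And>h. h \<in> l2 \<Longrightarrow> l2norm (\<lambda>n. X h n - poly_op a q h n) \<le> d * l2norm h"
  shows "cmod (X e0 j - coeff q j * wprod j) \<le> d"
proof -
  have "cmod (X e0 j - poly_op a q e0 j) \<le> l2norm (\<lambda>n. X e0 n - poly_op a q e0 n)"
    by (rule l2_coord[OF l2_diff(1)[OF A_l2[OF X e0_l2] P_l2(1)[OF e0_l2]]])
  also have "\<dots> \<le> d" using q[OF e0_l2] basis_l2(2) by simp
  finally show ?thesis by (simp add: P_basis)
qed

lemma Xe0_0:
  assumes X: "X \<in> alg_T a"
  shows "X e0 0 = 0"
proof -
  have "cmod (X e0 0) \<le> 0"
  proof (rule field_le_epsilon)
    fix e :: real assume e: "0 < e"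
    obtain q where q: "coeff q 0 = 0" "\<And>h. h \<in> l2 \<Longrightarrow> l2norm (\<lambda>n. X h n - poly_op a q h n) \<le> e * l2norm h"
      using A_approx[OF X e] by blast
    show "cmod (X e0 0) \<le> 0 + e" using coeff_close[OF X q(2), of 0] q(1) by simp
  qed
  then show ?thesis by simp
qed

lemma FC_ident:
  assumes X: "X \<in> alg_T a" and f: "f \<in> l2" and g: "g \<in> l2"
  shows "complex_of_real (1 / (2 * pi)) *
        integral {0..2*pi} (\<lambda>t. l2inner (gauge_act (cis t) X f) g * cnj (cis t) ^ j)
      = (X e0 j / wprod j) * l2inner ((T ^^ j) f) g"
proof -
  define F where "F = (\<lambda>t. l2inner (gauge_act (cis t) X f) g * cnj (cis t) ^ j)"
  define G where "G q = (\<lambda>t. l2inner (gauge_act (cis t) (poly_op a q) f) g * cnj (cis t) ^ j)" for q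
  define L where "L = l2inner ((T ^^ j) f) g"
  define B where "B = l2norm f * l2norm g"
  define c0 where "c0 = X e0 j / wprod j"
  have B: "0 \<le> B" unfolding B_def using l2norm_nonneg[OF f] l2norm_nonneg[OF g] by simp
  have W: "0 < cmod (wprod j)" using wprod_nz by simp
  have Gint: "(G q has_integral (of_real (2*pi) * (coeff q j * L))) {0..2*pi}" for q
    unfolding G_def L_def by (rule G_integral[of q "Suc (max (degree q) j)" j, OF _ _ f g]) auto
  have Fd: "cmod (F t - G q t) \<le> d * B" if "\<And>h. h \<in> l2 \<Longrightarrow> l2norm (\<lambda>n. X h n - poly_op a q h n) \<le> d * l2norm h" for q d t
    unfolding F_def G_def B_def using F_diff_bound[OF X that f g] by (simp add: mult.assoc)
  have Fint: "F integrable_on {0..2*pi}"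
  proof (rule integrable_uniform_limit_real)
    fix e :: real assume e: "0 < e"
    have dp: "0 < e / (B + 1)" using e B by simp
    obtain q where q: "coeff q 0 = 0" "\<And>h. h \<in> l2 \<Longrightarrow> l2norm (\<lambda>n. X h n - poly_op a q h n) \<le> e / (B + 1) * l2norm h"
      using A_approx[OF X dp] by blast
    have "e / (B + 1) * B \<le> e / (B + 1) * (B + 1)" by (rule mult_left_mono) (use dp in auto)
    then have "e / (B + 1) * B \<le> e" using B by simp
    then have "\<forall>x\<in>{0..2*pi}. norm (F x - G q x) \<le> e" using Fd[OF q(2)] by (meson order_trans)
    moreover have "G q integrable_on {0..2*pi}" using Gint by blast
    ultimately show "\<exists>g. (\<forall>x\<in>{0..2*pi}. norm (F x - g x) \<le> e) \<and> g integrable_on {0..2*pi}" by blast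
  qed
  define I where "I = integral {0..2*pi} F"
  have FI: "(F has_integral I) {0..2*pi}" unfolding I_def using Fint by blast
  have "cmod (complex_of_real (1 / (2 * pi)) * I - c0 * L) \<le> 0"
  proof (rule field_le_epsilon)
    fix e :: real assume e: "0 < e"
    define K where "K = B + cmod L / cmod (wprod j) + 1"
    have Kp: "0 < K" unfolding K_def using B W by (simp add: add_nonneg_pos)
    define d where "d = e / K"
    have dp: "0 < d" unfolding d_def using e Kp by simp
    obtain q where q: "coeff q 0 = 0" "\<And>h. h \<in> l2 \<Longrightarrow> l2norm (\<lambda>n. X h n - poly_op a q h n) \<le> d * l2norm h"
      using A_approx[OF X dp] by blast
    have "((\<lambda>t. F t - G q t) has_integral (I - of_real (2*pi) * (coeff q j * L))) {0..2*pi}"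
      by (rule has_integral_diff[OF FI Gint])
    note hI = this
    have hb: "\<And>x. x \<in> {0..2*pi} - {} \<Longrightarrow> norm (F x - G q x) \<le> d * B" using Fd[OF q(2)] by simp
    have dB: "0 \<le> d * B" using dp B by simp
    have b1: "cmod (I - of_real (2*pi) * (coeff q j * L)) \<le> (d * B) * (2 * pi)"
      using has_integral_bound_real[OF dB finite.emptyI hI hb] by simp
    have "complex_of_real (1 / (2 * pi)) * I - coeff q j * L = complex_of_real (1 / (2 * pi)) * (I - of_real (2*pi) * (coeff q j * L))"
      by (simp add: field_simps)
    moreover have "cmod (complex_of_real (1 / (2 * pi)) * (I - of_real (2*pi) * (coeff q j * L)))
        = (1 / (2 * pi)) * cmod (I - of_real (2*pi) * (coeff q j * L))" by (simp add: norm_mult norm_divide)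
    moreover have "(1 / (2 * pi)) * cmod (I - of_real (2*pi) * (coeff q j * L)) \<le> (1 / (2 * pi)) * ((d * B) * (2 * pi))"
      by (rule mult_left_mono[OF b1]) simp
    moreover have "(1 / (2 * pi)) * ((d * B) * (2 * pi)) = d * B" by simp
    ultimately have b2: "cmod (complex_of_real (1 / (2 * pi)) * I - coeff q j * L) \<le> d * B" by simp
    have "cmod (coeff q j - c0) = cmod (coeff q j * wprod j - X e0 j) / cmod (wprod j)"
      unfolding c0_def using wprod_nz by (simp add: norm_divide[symmetric] field_simps)
    also have "\<dots> \<le> d / cmod (wprod j)"
      using coeff_close[OF X q(2), of j] W by (simp add: divide_right_mono norm_minus_commute)
    finally have b3: "cmod (coeff q j - c0) * cmod L \<le> d / cmod (wprod j) * cmod L"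
      by (rule mult_right_mono) simp
    have "cmod (complex_of_real (1 / (2 * pi)) * I - c0 * L) \<le> cmod (complex_of_real (1 / (2 * pi)) * I - coeff q j * L) + cmod ((coeff q j - c0) * L)"
      by (rule order_trans[OF _ norm_triangle_ineq]) (simp add: algebra_simps)
    also have "\<dots> \<le> d * B + d / cmod (wprod j) * cmod L" using b2 b3 by (simp add: norm_mult)
    also have "\<dots> \<le> d * K" unfolding K_def using dp by (simp add: algebra_simps)
    also have "\<dots> = e" unfolding d_def using Kp by simp
    finally show "cmod (complex_of_real (1 / (2 * pi)) * I - c0 * L) \<le> 0 + e" by simp
  qed
  then show ?thesis unfolding I_def F_def c0_def L_def by simp
qed

lemma FC:
  assumes X: "X \<in> alg_T a"
  shows "fourier_coeff a X j = X e0 j / wprod j"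
  unfolding fourier_coeff_def
proof (rule the_equality)
  show "\<forall>f\<in>l2. \<forall>g\<in>l2. complex_of_real (1 / (2 * pi)) *
      integral {0..2*pi} (\<lambda>t. l2inner (gauge_act (cis t) X f) g * cnj (cis t) ^ j)
      = (X e0 j / wprod j) * l2inner ((wshift a ^^ j) f) g"
    using FC_ident[OF X] by blast
next
  fix c assume H: "\<forall>f\<in>l2. \<forall>g\<in>l2. complex_of_real (1 / (2 * pi)) *
      integral {0..2*pi} (\<lambda>t. l2inner (gauge_act (cis t) X f) g * cnj (cis t) ^ j)
      = c * l2inner ((wshift a ^^ j) f) g"
  have i: "l2inner ((T ^^ j) e0) (basis_vec j) = wprod j" by (simp add: l2inner_basis T_basis)
  have h1: "complex_of_real (1 / (2 * pi)) *
      integral {0..2*pi} (\<lambda>t. l2inner (gauge_act (cis t) X e0) (basis_vec j) * cnj (cis t) ^ j)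
      = c * l2inner ((T ^^ j) e0) (basis_vec j)" using H e0_l2 basis_l2(1)[of j] by blast
  have h2: "complex_of_real (1 / (2 * pi)) *
      integral {0..2*pi} (\<lambda>t. l2inner (gauge_act (cis t) X e0) (basis_vec j) * cnj (cis t) ^ j)
      = (X e0 j / wprod j) * l2inner ((T ^^ j) e0) (basis_vec j)" by (rule FC_ident[OF X e0_l2 basis_l2(1)])
  have "c * wprod j = (X e0 j / wprod j) * wprod j" using h1 h2 i by simp
  then have "c * wprod j = X e0 j" using wprod_nz[of j] by simp
  then show "c = X e0 j / wprod j" using wprod_nz[of j] by (simp add: eq_divide_eq)
qed

end


context ws
begin

lemma claim1:
  assumes s: "s \<in> l2" and z: "\<And>n. n < k \<Longrightarrow> s n = 0"
  shows "cspan ((T ^^ k) e0) s"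
  unfolding cspan_sumform
proof (intro allI impI)
  fix eps :: real assume e: "eps > 0"
  obtain N where N: "l2norm (\<lambda>n. if n < N then 0 else s n) < eps" using l2_tail[OF s e] by blast
  define c where "c m = s (m + k) / wprod (m + k)" for m
  have sm: "(\<Sum>m<N. c m * (T ^^ m) ((T ^^ k) e0) n) = (if k \<le> n \<and> n - k < N then s n else 0)" for n
  proof -
    have "(\<Sum>m<N. c m * (T ^^ m) ((T ^^ k) e0) n) = (\<Sum>m<N. c m * (if n = m + k then wprod (m + k) else 0))"
    proof (rule sum.cong[OF refl])
      fix m
      have "(T ^^ (m + k)) e0 = (T ^^ m) ((T ^^ k) e0)" by (simp add: funpow_add)
      then have "(T ^^ m) ((T ^^ k) e0) = (\<lambda>n. if n = m + k then wprod (m + k) else 0)"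
        using T_basis[of "m + k"] by simp
      then show "c m * (T ^^ m) ((T ^^ k) e0) n = c m * (if n = m + k then wprod (m + k) else 0)" by simp
    qed
    also have "\<dots> = (\<Sum>m<N. if m = n - k \<and> k \<le> n then c m * wprod (m + k) else 0)"
      by (rule sum.cong) auto
    also have "\<dots> = (if k \<le> n \<and> n - k < N then s n else 0)"
      by (cases "k \<le> n") (simp_all add: sum.delta' c_def wprod_nz)
    finally show ?thesis .
  qed
  have b: "cmod (s n - (\<Sum>m<N. c m * (T ^^ m) ((T ^^ k) e0) n)) \<le> 1 * cmod (if n < N then 0 else s n)" for n
    unfolding sm using z[of n] by auto
  have tl: "(\<lambda>n. if n < N then 0 else s n) \<in> l2" using l2_compare(1)[OF s, of "\<lambda>n. if n < N then 0 else s n" 1] by simp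
  have "l2norm (\<lambda>n. s n - (\<Sum>m<N. c m * (T ^^ m) ((T ^^ k) e0) n)) \<le> 1 * l2norm (\<lambda>n. if n < N then 0 else s n)"
    by (rule l2_compare(2)[OF tl b]) simp
  then show "\<exists>N c. l2norm (\<lambda>n. s n - (\<Sum>m<N. c m * (T ^^ m) ((T ^^ k) e0) n)) < eps"
    using N by (intro exI[of _ N] exI[of _ c]) simp
qed

lemma claim2:
  assumes v: "v \<in> l2"
  shows "cspan v ((T ^^ k) e0) \<longleftrightarrow> cspan v (basis_vec k)"
proof -
  have e1: "(T ^^ k) e0 = (\<lambda>n. wprod k * basis_vec k n)" unfolding T_basis by (auto simp: basis_vec_def)
  have e2: "basis_vec k = (\<lambda>n. (1 / wprod k) * (T ^^ k) e0 n)" unfolding e1 using wprod_nz[of k] by simp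
  have Tl: "(T ^^ k) e0 \<in> l2" using T_l2[OF e0_l2] by blast
  show ?thesis
  proof
    assume "cspan v ((T ^^ k) e0)"
    then show "cspan v (basis_vec k)" using cs_scale[OF v Tl] e2 by metis
  next
    assume "cspan v (basis_vec k)"
    then show "cspan v ((T ^^ k) e0)" using cs_scale[OF v basis_l2(1)] e1 by metis
  qed
qed

end

theorem mainTheorem12:
  fixes a :: "nat \<Rightarrow> complex"
    and S :: "(nat \<Rightarrow> complex) \<Rightarrow> (nat \<Rightarrow> complex)"
    and k :: nat
  assumes "\<forall>n. a n \<noteq> 0"
    and "\<forall>n. cmod (a (Suc n)) \<le> cmod (a n)"
    and "summable (\<lambda>n. (cmod (a n))^2)"
    and "S \<in> alg_T a"
    and "k > 1"
    and "\<forall>j\<in>{1..k-1}. fourier_coeff a S j = 0"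
    and "fourier_coeff a S k \<noteq> 0"
  shows "gen_ideal a S = gen_ideal a (wshift a ^^ k) \<longleftrightarrow>
         (\<forall>eps>0. \<exists>N c. l2norm (\<lambda>n. basis_vec k n -
            (\<Sum>m<N. c m * (wshift a ^^ m) (S (basis_vec 0)) n)) < eps)"
proof -
  interpret ws a using assms(1-3) by unfold_locales
  have SA: "S \<in> alg_T a" by (rule assms(4))
  have TkA: "(wshift a ^^ k) \<in> alg_T a" by (rule T_in_A) (use assms(5) in simp)
  have s: "S e0 \<in> l2" by (rule A_l2[OF SA e0_l2])
  have z: "S e0 n = 0" if "n < k" for n
  proof (cases "n = 0")
    case True then show ?thesis using Xe0_0[OF SA] by simp
  next
    case False
    then have "n \<in> {1..k-1}" using that by auto
    then have "fourier_coeff a S n = 0" using assms(6) by blast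
    then show ?thesis unfolding FC[OF SA] using wprod_nz[of n] by simp
  qed
  have c1: "S \<in> J0 (wshift a ^^ k)" unfolding J0_def using SA claim1[OF s z] by simp
  have RHS: "(\<forall>eps>0. \<exists>N c. l2norm (\<lambda>n. basis_vec k n -
            (\<Sum>m<N. c m * (wshift a ^^ m) (S (basis_vec 0)) n)) < eps) \<longleftrightarrow> (wshift a ^^ k) \<in> J0 S"
    unfolding J0_def using TkA claim2[OF s] cspan_sumform by simp
  have gS: "gen_ideal a S = J0 S" by (rule gen_eq_J0[OF SA])
  have gT: "gen_ideal a (wshift a ^^ k) = J0 (wshift a ^^ k)" by (rule gen_eq_J0[OF TkA])
  show ?thesis
  proof
    assume eq: "gen_ideal a S = gen_ideal a (wshift a ^^ k)"
    have "(wshift a ^^ k) \<in> J0 (wshift a ^^ k)" by (rule R_in_J0[OF TkA])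
    then have "(wshift a ^^ k) \<in> J0 S" using eq gS gT by simp
    then show "\<forall>eps>0. \<exists>N c. l2norm (\<lambda>n. basis_vec k n -
            (\<Sum>m<N. c m * (wshift a ^^ m) (S (basis_vec 0)) n)) < eps" using RHS by simp
  next
    assume "\<forall>eps>0. \<exists>N c. l2norm (\<lambda>n. basis_vec k n -
            (\<Sum>m<N. c m * (wshift a ^^ m) (S (basis_vec 0)) n)) < eps"
    then have TJ: "(wshift a ^^ k) \<in> J0 S" using RHS by simp
    have "gen_ideal a S \<subseteq> gen_ideal a (wshift a ^^ k)"
      using gen_le[OF J0_ideal[OF TkA] c1] gT by simp
    moreover have "gen_ideal a (wshift a ^^ k) \<subseteq> gen_ideal a S"
      using gen_le[OF J0_ideal[OF SA] TJ] gS by simp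
    ultimately show "gen_ideal a S = gen_ideal a (wshift a ^^ k)" by blast
  qed
qed


end
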